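(* Let $k=\mathbb{Q}(t_1,t_2,t_3,t_4)$ be a purely transcendental extension of $\mathbb{Q}$ of transcendence degree $4$, let $E/k$ be the elliptic curve $y^2=x(x-t_1)(x-t_2)$, and let $K=k(x)[y]/(y^2-x(x-t_1)(x-t_2))$ be its function field. Then the central simple algebra $A=\langle x,t_3\rangle\otimes\langle x-t_1,t_4\rangle$ over $K$ has index $4$ (i.e. is a division algebra).
   Context: For a field $L$ and $u,v\in L^*$, $\langle u,v\rangle$ denotes the quaternion algebra over $L$ generated by $i,j$ with $i^2=u$, $j^2=v$, $ij=-ji$. The index of a central simple algebra is the index of its Brauer class. *)

theory Defs
  imports "HOL-Computational_Algebra.Computational_Algebra"
          "HOL-Computational_Algebra.Fraction_Field"
begin

text \<open>Elements of an algebra with basis the monomials e_S = g_i1 g_i2 ... (i1 < i2 < ...),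
  S a subset of {..<n}, are coefficient functions nat set => 'a (zero outside Pow {..<n}).
  The generators satisfy g_i^2 = sq i (central scalars) and g_j g_i = eps i j * g_i g_j for j < i.
  Hence e_S e_T = (prod over i in S, j in T, j < i of eps i j) * (prod over j in S Int T of sq j) * e_(S symdiff T).\<close>

definition monprod :: "(nat \<Rightarrow> 'a::comm_ring_1) \<Rightarrow> (nat \<Rightarrow> nat \<Rightarrow> 'a) \<Rightarrow> nat set \<Rightarrow> nat set \<Rightarrow> 'a" where
  "monprod sq eps S T =
     (\<Prod>p\<in>{(i,j). i \<in> S \<and> j \<in> T \<and> j < i}. eps (fst p) (snd p)) * (\<Prod>j\<in>S \<inter> T. sq j)"

definition gen_mult :: "nat \<Rightarrow> (nat \<Rightarrow> 'a::comm_ring_1) \<Rightarrow> (nat \<Rightarrow> nat \<Rightarrow> 'a)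
    \<Rightarrow> (nat set \<Rightarrow> 'a) \<Rightarrow> (nat set \<Rightarrow> 'a) \<Rightarrow> (nat set \<Rightarrow> 'a)" where
  "gen_mult n sq eps u v = (\<lambda>U. \<Sum>S\<in>Pow {..<n}. \<Sum>T\<in>Pow {..<n}.
       if (S - T) \<union> (T - S) = U then u S * v T * monprod sq eps S T else 0)"

definition gen_one :: "nat set \<Rightarrow> 'a::comm_ring_1" where
  "gen_one = (\<lambda>S. if S = {} then 1 else 0)"

text \<open>The biquaternion algebra <a,b> (x) <c,d>: generators i1 = g0, j1 = g1, i2 = g2, j2 = g3,
  with i1^2 = a, j1^2 = b, i1 j1 = - j1 i1, i2^2 = c, j2^2 = d, i2 j2 = - j2 i2,
  and generators of different factors commuting.\<close>

definition biquat_sq :: "'a::comm_ring_1 \<Rightarrow> 'a \<Rightarrow> 'a \<Rightarrow> 'a \<Rightarrow> nat \<Rightarrow> 'a" where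
  "biquat_sq a b c d i = [a, b, c, d] ! i"

definition biquat_eps :: "nat \<Rightarrow> nat \<Rightarrow> 'a::comm_ring_1" where
  "biquat_eps i j = (if (i, j) = (1, 0) \<or> (i, j) = (3, 2) then - 1 else 1)"

definition biquat_mult :: "'a::comm_ring_1 \<Rightarrow> 'a \<Rightarrow> 'a \<Rightarrow> 'a \<Rightarrow>
    (nat set \<Rightarrow> 'a) \<Rightarrow> (nat set \<Rightarrow> 'a) \<Rightarrow> (nat set \<Rightarrow> 'a)" where
  "biquat_mult a b c d = gen_mult 4 (biquat_sq a b c d) biquat_eps"

type_synonym kfield = "rat poly poly poly poly fract"
type_synonym kx = "kfield poly fract"

definition t1 :: kfield where "t1 = Fract [:[:[:[:0, 1:]:]:]:] 1"
definition t2 :: kfield where "t2 = Fract [:[:[:0, 1:]:]:] 1"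
definition t3 :: kfield where "t3 = Fract [:[:0, 1:]:] 1"
definition t4 :: kfield where "t4 = Fract [:0, 1:] 1"

definition const_kx :: "kfield \<Rightarrow> kx" where "const_kx c = Fract [:c:] 1"
definition xvar :: kx where "xvar = Fract [:0, 1:] 1"

definition cubic :: kx where
  "cubic = xvar * (xvar - const_kx t1) * (xvar - const_kx t2)"

text \<open>K = k(x)[y]/(y^2 - cubic): elements are represented by their canonical representatives,
  polynomials in y over k(x) of degree < 2; multiplication is followed by reduction mod kmod.\<close>
definition kmod :: "kx poly" where "kmod = [:- cubic, 0, 1:]"

definition K_elem :: "kx poly \<Rightarrow> bool" where "K_elem p \<longleftrightarrow> degree p < 2"

definition A_carrier :: "(nat set \<Rightarrow> kx poly) set" where
  "A_carrier = {u. (\<forall>S. K_elem (u S)) \<and> (\<forall>S. S \<notin> Pow {..<4} \<longrightarrow> u S = 0)}"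

definition A_mult :: "(nat set \<Rightarrow> kx poly) \<Rightarrow> (nat set \<Rightarrow> kx poly) \<Rightarrow> (nat set \<Rightarrow> kx poly)" where
  "A_mult u v = (\<lambda>S. biquat_mult [:xvar:] [:const_kx t3:] [:xvar - const_kx t1:] [:const_kx t4:] u v S
                      mod kmod)"

definition A_one :: "nat set \<Rightarrow> kx poly" where "A_one = gen_one"

definition A_zero :: "nat set \<Rightarrow> kx poly" where "A_zero = (\<lambda>_. 0)"

end

theory Submission
  imports Defs "HOL-Library.Function_Algebras"
begin

definition sd :: "nat set \<Rightarrow> nat set \<Rightarrow> nat set" where "sd S U = (S - U) \<union> (U - S)"

lemma sd_eq_iff: "((S - T) \<union> (T - S) = U) \<longleftrightarrow> T = sd S U"
  unfolding sd_def by blast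

lemma gm_eq:
  assumes "U \<subseteq> {..<n}"
  shows "gen_mult n sq eps u v U = (\<Sum>S\<in>Pow {..<n}. u S * v (sd S U) * monprod sq eps S (sd S U))"
proof -
  have "gen_mult n sq eps u v U = (\<Sum>S\<in>Pow {..<n}. \<Sum>T\<in>Pow {..<n}.
       if T = sd S U then u S * v T * monprod sq eps S T else 0)"
    unfolding gen_mult_def by (simp add: sd_eq_iff)
  also have "\<dots> = (\<Sum>S\<in>Pow {..<n}. u S * v (sd S U) * monprod sq eps S (sd S U))"
    apply (rule sum.cong, simp)
    apply (subst sum.delta, simp)
    using assms by (auto simp: sd_def)
  finally show ?thesis .
qed

lemma gm_out:
  assumes "\<not> U \<subseteq> {..<n}"
  shows "gen_mult n sq eps u v U = 0"
  unfolding gen_mult_def using assms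
  by (intro sum.neutral ballI) auto

lemma fin_pairs: "finite S \<Longrightarrow> finite T \<Longrightarrow> finite {(i,j). i \<in> S \<and> j \<in> T \<and> (j::nat) < i}"
  by (rule finite_subset[of _ "S \<times> T"]) auto

lemma mp_insL:
  fixes sq :: "nat \<Rightarrow> 'a::comm_ring_1"
  assumes "finite S" "finite T" "m \<notin> S"
  shows "monprod sq eps (insert m S) T = monprod sq eps S T * (\<Prod>j\<in>{j\<in>T. j<m}. eps m j)
           * (if m \<in> T then sq m else 1)"
proof -
  have P: "{(i,j). i \<in> insert m S \<and> j \<in> T \<and> j < i} =
     {(i,j). i \<in> S \<and> j \<in> T \<and> j < i} \<union> (\<lambda>j. (m,j)) ` {j\<in>T. j<m}" by auto
  have D: "{(i,j). i \<in> S \<and> j \<in> T \<and> j < i} \<inter> (\<lambda>j. (m,j)) ` {j\<in>T. j<m} = {}"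
    using assms(3) by auto
  have e: "(\<Prod>p\<in>{(i,j). i \<in> insert m S \<and> j \<in> T \<and> j < i}. eps (fst p) (snd p)) =
     (\<Prod>p\<in>{(i,j). i \<in> S \<and> j \<in> T \<and> j < i}. eps (fst p) (snd p)) * (\<Prod>j\<in>{j\<in>T. j<m}. eps m j)"
    unfolding P
    apply (subst prod.union_disjoint)
    using assms D apply (auto intro: fin_pairs)[3]
    apply (subst prod.reindex)
    by (auto simp: inj_on_def)
  have s: "(\<Prod>j\<in>insert m S \<inter> T. sq j) = (\<Prod>j\<in>S \<inter> T. sq j) * (if m \<in> T then sq m else 1)"
  proof (cases "m \<in> T")
    case True
    then have "insert m S \<inter> T = insert m (S \<inter> T)" by auto
    then show ?thesis using True assms by (simp add: mult.commute)
  next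
    case False
    then have "insert m S \<inter> T = S \<inter> T" by auto
    then show ?thesis using False by simp
  qed
  show ?thesis unfolding monprod_def e s by (simp add: algebra_simps)
qed

lemma mp_insR:
  fixes sq :: "nat \<Rightarrow> 'a::comm_ring_1"
  assumes "finite S" "finite T" "m \<notin> T"
  shows "monprod sq eps S (insert m T) = monprod sq eps S T * (\<Prod>i\<in>{i\<in>S. m<i}. eps i m)
           * (if m \<in> S then sq m else 1)"
proof -
  have P: "{(i,j). i \<in> S \<and> j \<in> insert m T \<and> j < i} =
     {(i,j). i \<in> S \<and> j \<in> T \<and> j < i} \<union> (\<lambda>i. (i,m)) ` {i\<in>S. m<i}" by auto
  have D: "{(i,j). i \<in> S \<and> j \<in> T \<and> j < i} \<inter> (\<lambda>i. (i,m)) ` {i\<in>S. m<i} = {}"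
    using assms(3) by auto
  have e: "(\<Prod>p\<in>{(i,j). i \<in> S \<and> j \<in> insert m T \<and> j < i}. eps (fst p) (snd p)) =
     (\<Prod>p\<in>{(i,j). i \<in> S \<and> j \<in> T \<and> j < i}. eps (fst p) (snd p)) * (\<Prod>i\<in>{i\<in>S. m<i}. eps i m)"
    unfolding P
    apply (subst prod.union_disjoint)
    using assms D apply (auto intro: fin_pairs)[3]
    apply (subst prod.reindex)
    by (auto simp: inj_on_def)
  have s: "(\<Prod>j\<in>S \<inter> insert m T. sq j) = (\<Prod>j\<in>S \<inter> T. sq j) * (if m \<in> S then sq m else 1)"
  proof (cases "m \<in> S")
    case True
    then have "S \<inter> insert m T = insert m (S \<inter> T)" by auto
    then show ?thesis using True assms by (simp add: mult.commute)
  next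
    case False
    then have "S \<inter> insert m T = S \<inter> T" by auto
    then show ?thesis using False by simp
  qed
  show ?thesis unfolding monprod_def e s by (simp add: algebra_simps)
qed

lemma mp_insLR:
  fixes sq :: "nat \<Rightarrow> 'a::comm_ring_1"
  assumes "finite S" "finite T" "m \<notin> S" "m \<notin> T"
  shows "monprod sq eps (insert m S) (insert m T) = monprod sq eps S T * (\<Prod>j\<in>{j\<in>T. j<m}. eps m j)
           * (\<Prod>i\<in>{i\<in>S. m<i}. eps i m) * sq m"
proof -
  have "{j\<in>insert m T. j<m} = {j\<in>T. j<m}" by auto
  then show ?thesis using mp_insL[of S "insert m T" m sq eps] mp_insR[of S T m sq eps] assms
    by (simp add: algebra_simps)
qed

lemma gm_cases:
  assumes "U \<subseteq> {..<n} \<Longrightarrow> P (\<Sum>S\<in>Pow {..<n}. u S * v (sd S U) * monprod sq eps S (sd S U))"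
    and "\<not> U \<subseteq> {..<n} \<Longrightarrow> P 0"
  shows "P (gen_mult n sq eps u v U)"
  using assms gm_eq gm_out by metis

lemma gm_add_left:
  "gen_mult n sq eps (\<lambda>S. u S + u' S) v U = gen_mult n sq eps u v U + gen_mult n sq eps u' v U"
  by (cases "U \<subseteq> {..<n}") (simp_all add: gm_eq gm_out sum.distrib algebra_simps)

lemma gm_add_right:
  "gen_mult n sq eps u (\<lambda>S. v S + v' S) U = gen_mult n sq eps u v U + gen_mult n sq eps u v' U"
  by (cases "U \<subseteq> {..<n}") (simp_all add: gm_eq gm_out sum.distrib algebra_simps)

lemma gm_scal_left:
  "gen_mult n sq eps (\<lambda>S. c * u S) v U = c * gen_mult n sq eps u v U"
  by (cases "U \<subseteq> {..<n}") (simp_all add: gm_eq gm_out sum_distrib_left algebra_simps)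

lemma gm_scal_right:
  "gen_mult n sq eps u (\<lambda>S. c * v S) U = c * gen_mult n sq eps u v U"
  by (cases "U \<subseteq> {..<n}") (simp_all add: gm_eq gm_out sum_distrib_left algebra_simps)

lemma gm_zero_left: "gen_mult n sq eps (\<lambda>_. 0) v U = 0"
  by (cases "U \<subseteq> {..<n}") (simp_all add: gm_eq gm_out)

lemma gm_zero_right: "gen_mult n sq eps u (\<lambda>_. 0) U = 0"
  by (cases "U \<subseteq> {..<n}") (simp_all add: gm_eq gm_out)

lemma gm_vanish:
  assumes "\<And>S. u S * v (sd S U) = 0"
  shows "gen_mult n sq eps u v U = 0"
proof (cases "U \<subseteq> {..<n}")
  case True
  have "\<And>S. u S * v (sd S U) * monprod sq eps S (sd S U) = 0" using assms by simp
  then show ?thesis using True by (simp add: gm_eq)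
qed (simp add: gm_out)

lemma sum_split_m:
  fixes m n :: nat
  assumes "m < n"
  shows "(\<Sum>S\<in>Pow {..<n}. f S) = (\<Sum>S\<in>{S\<in>Pow {..<n}. m \<notin> S}. f S + f (insert m S))"
proof -
  let ?A = "{S\<in>Pow {..<n}. m \<notin> S}"
  have U: "Pow {..<n} = ?A \<union> insert m ` ?A"
  proof (rule set_eqI, rule iffI)
    fix S assume S: "S \<in> Pow {..<n}"
    show "S \<in> ?A \<union> insert m ` ?A"
    proof (cases "m \<in> S")
      case True
      then have "S = insert m (S - {m})" by auto
      moreover have "S - {m} \<in> ?A" using S by auto
      ultimately show ?thesis by blast
    next
      case False then show ?thesis using S by simp
    qed
  next
    fix S assume "S \<in> ?A \<union> insert m ` ?A"
    then show "S \<in> Pow {..<n}" using assms by auto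
  qed
  have D: "?A \<inter> insert m ` ?A = {}" by auto
  have I: "inj_on (insert m) ?A"
    unfolding inj_on_def by (metis (mono_tags, lifting) insert_ident mem_Collect_eq)
  have F: "finite ?A" by (rule finite_subset[of _ "Pow {..<n}"]) auto
  have "(\<Sum>S\<in>Pow {..<n}. f S) = (\<Sum>S\<in>?A. f S) + (\<Sum>S\<in>insert m ` ?A. f S)"
    by (subst U, rule sum.union_disjoint) (use D F in auto)
  also have "(\<Sum>S\<in>insert m ` ?A. f S) = (\<Sum>S\<in>?A. f (insert m S))"
    by (rule sum.reindex[OF I, unfolded comp_def])
  finally show ?thesis by (simp add: sum.distrib)
qed

definition shift :: "nat \<Rightarrow> (nat set \<Rightarrow> 'a::zero) \<Rightarrow> nat set \<Rightarrow> 'a" where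
  "shift m a = (\<lambda>S. if m \<in> S then 0 else a (insert m S))"
definition twL :: "nat \<Rightarrow> (nat \<Rightarrow> nat \<Rightarrow> 'a::comm_ring_1) \<Rightarrow> (nat set \<Rightarrow> 'a) \<Rightarrow> nat set \<Rightarrow> 'a" where
  "twL m eps c = (\<lambda>T. c T * (\<Prod>j\<in>{j\<in>T. j<m}. eps m j))"
definition twR :: "nat \<Rightarrow> (nat \<Rightarrow> nat \<Rightarrow> 'a::comm_ring_1) \<Rightarrow> (nat set \<Rightarrow> 'a) \<Rightarrow> nat set \<Rightarrow> 'a" where
  "twR m eps c = (\<lambda>S. c S * (\<Prod>i\<in>{i\<in>S. m<i}. eps i m))"
definition oddm :: "nat \<Rightarrow> (nat set \<Rightarrow> 'a::zero) \<Rightarrow> bool" where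
  "oddm m a \<longleftrightarrow> (\<forall>S. m \<notin> S \<longrightarrow> a S = 0)"
definition evenm :: "nat \<Rightarrow> (nat set \<Rightarrow> 'a::zero) \<Rightarrow> bool" where
  "evenm m a \<longleftrightarrow> (\<forall>S. m \<in> S \<longrightarrow> a S = 0)"

lemma sd_ins_both: "m \<notin> S \<Longrightarrow> m \<notin> U \<Longrightarrow> sd (insert m S) (insert m U) = sd S U"
  unfolding sd_def by auto
lemma sd_ins_l: "m \<notin> S \<Longrightarrow> m \<notin> U \<Longrightarrow> sd (insert m S) U = insert m (sd S U)"
  unfolding sd_def by auto
lemma sd_ins_r: "m \<notin> S \<Longrightarrow> m \<notin> U \<Longrightarrow> sd S (insert m U) = insert m (sd S U)"
  unfolding sd_def by auto
lemma sd_notin: "m \<notin> S \<Longrightarrow> m \<notin> U \<Longrightarrow> m \<notin> sd S U"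
  unfolding sd_def by auto
lemma sd_sub: "S \<subseteq> {..<n} \<Longrightarrow> U \<subseteq> {..<n} \<Longrightarrow> sd S U \<subseteq> {..<n}"
  unfolding sd_def by auto
lemma fin_sub: "S \<subseteq> {..<(n::nat)} \<Longrightarrow> finite S"
  using finite_subset by blast

lemma S1:
  fixes a c :: "nat set \<Rightarrow> 'a::comm_ring_1" and m n :: nat
  assumes odd: "oddm m a" and mn: "m < n" and mU: "m \<notin> U"
  shows "gen_mult n sq eps a c (insert m U) = gen_mult n sq eps (shift m a) (twL m eps c) U"
proof (cases "U \<subseteq> {..<n}")
  case True
  then have T2: "insert m U \<subseteq> {..<n}" using mn by auto
  show ?thesis
    unfolding gm_eq[OF True] gm_eq[OF T2]
    unfolding sum_split_m[OF mn]
  proof (rule sum.cong[OF refl])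
    fix S assume "S \<in> {S\<in>Pow {..<n}. m \<notin> S}"
    then have S: "S \<subseteq> {..<n}" "m \<notin> S" by auto
    have f: "finite S" "finite (sd S U)" using S True fin_sub sd_sub by metis+
    have 1: "a S = 0" using odd S by (simp add: oddm_def)
    have 2: "shift m a (insert m S) = 0" "shift m a S = a (insert m S)" using S by (auto simp: shift_def)
    have 3: "sd (insert m S) (insert m U) = sd S U" using S(2) mU by (rule sd_ins_both)
    have 4: "m \<notin> sd S U" using S mU by (intro sd_notin)
    have 5: "monprod sq eps (insert m S) (sd S U) = monprod sq eps S (sd S U) * (\<Prod>j\<in>{j\<in>sd S U. j<m}. eps m j)"
      using mp_insL[OF f S(2)] 4 by simp
    show "a S * c (sd S (insert m U)) * monprod sq eps S (sd S (insert m U)) +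
          a (insert m S) * c (sd (insert m S) (insert m U)) * monprod sq eps (insert m S) (sd (insert m S) (insert m U)) =
          shift m a S * twL m eps c (sd S U) * monprod sq eps S (sd S U) +
          shift m a (insert m S) * twL m eps c (sd (insert m S) U) * monprod sq eps (insert m S) (sd (insert m S) U)"
      unfolding 1 2 3 5 twL_def by (simp add: ac_simps)
  qed
next
  case False
  then have "\<not> insert m U \<subseteq> {..<n}" by auto
  then show ?thesis using False by (simp add: gm_out)
qed

lemma S2:
  fixes a c :: "nat set \<Rightarrow> 'a::comm_ring_1" and m n :: nat
  assumes odd: "oddm m a" and even: "evenm m c" and mn: "m < n" and mU: "m \<notin> U"
  shows "gen_mult n sq eps c a (insert m U) = gen_mult n sq eps (twR m eps c) (shift m a) U"
proof (cases "U \<subseteq> {..<n}")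
  case True
  then have T2: "insert m U \<subseteq> {..<n}" using mn by auto
  show ?thesis
    unfolding gm_eq[OF True] gm_eq[OF T2]
    unfolding sum_split_m[OF mn]
  proof (rule sum.cong[OF refl])
    fix S assume "S \<in> {S\<in>Pow {..<n}. m \<notin> S}"
    then have S: "S \<subseteq> {..<n}" "m \<notin> S" by auto
    have f: "finite S" "finite (sd S U)" using S True fin_sub sd_sub by metis+
    have 1: "c (insert m S) = 0" "twR m eps c (insert m S) = 0" using even by (auto simp: evenm_def twR_def)
    have 4: "m \<notin> sd S U" using S mU by (intro sd_notin)
    have 2: "shift m a (sd S U) = a (insert m (sd S U))" using 4 by (auto simp: shift_def)
    have 3: "sd S (insert m U) = insert m (sd S U)" using S(2) mU by (rule sd_ins_r)
    have 5: "monprod sq eps S (insert m (sd S U)) = monprod sq eps S (sd S U) * (\<Prod>i\<in>{i\<in>S. m<i}. eps i m)"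
      using mp_insR[OF f 4] S by simp
    show "c S * a (sd S (insert m U)) * monprod sq eps S (sd S (insert m U)) +
          c (insert m S) * a (sd (insert m S) (insert m U)) * monprod sq eps (insert m S) (sd (insert m S) (insert m U)) =
          twR m eps c S * shift m a (sd S U) * monprod sq eps S (sd S U) +
          twR m eps c (insert m S) * shift m a (sd (insert m S) U) * monprod sq eps (insert m S) (sd (insert m S) U)"
      unfolding 1 2 3 5 twR_def by (simp add: ac_simps)
  qed
next
  case False
  then have "\<not> insert m U \<subseteq> {..<n}" by auto
  then show ?thesis using False by (simp add: gm_out)
qed

lemma S3:
  fixes a c :: "nat set \<Rightarrow> 'a::comm_ring_1" and m n :: nat
  assumes odda: "oddm m a" and oddc: "oddm m c" and mn: "m < n" and mU: "m \<notin> U"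
  shows "gen_mult n sq eps a c U = sq m * gen_mult n sq eps (twR m eps (shift m a)) (twL m eps (shift m c)) U"
proof (cases "U \<subseteq> {..<n}")
  case True
  show ?thesis
    unfolding gm_eq[OF True]
    unfolding sum_split_m[OF mn] sum_distrib_left
  proof (rule sum.cong[OF refl])
    fix S assume "S \<in> {S\<in>Pow {..<n}. m \<notin> S}"
    then have S: "S \<subseteq> {..<n}" "m \<notin> S" by auto
    have f: "finite S" "finite (sd S U)" using S True fin_sub sd_sub by metis+
    have 1: "a S = 0" using odda S by (simp add: oddm_def)
    have 4: "m \<notin> sd S U" using S mU by (intro sd_notin)
    have 2: "shift m a (insert m S) = 0" "shift m a S = a (insert m S)"
            "shift m c (sd S U) = c (insert m (sd S U))" using S 4 by (auto simp: shift_def)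
    have 3: "sd (insert m S) U = insert m (sd S U)" using S(2) mU by (rule sd_ins_l)
    have 5: "monprod sq eps (insert m S) (insert m (sd S U)) = monprod sq eps S (sd S U) *
       (\<Prod>j\<in>{j\<in>sd S U. j<m}. eps m j) * (\<Prod>i\<in>{i\<in>S. m<i}. eps i m) * sq m"
      by (rule mp_insLR[OF f S(2) 4])
    show "a S * c (sd S U) * monprod sq eps S (sd S U) +
          a (insert m S) * c (sd (insert m S) U) * monprod sq eps (insert m S) (sd (insert m S) U) =
          sq m * (twR m eps (shift m a) S * twL m eps (shift m c) (sd S U) * monprod sq eps S (sd S U) +
          twR m eps (shift m a) (insert m S) * twL m eps (shift m c) (sd (insert m S) U) *
            monprod sq eps (insert m S) (sd (insert m S) U))"
      unfolding 1 2 3 5 twR_def twL_def by (simp add: ac_simps)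
  qed
next
  case False
  then show ?thesis by (simp add: gm_out)
qed

definition is_hom :: "('a::comm_ring_1 \<Rightarrow> 'b::comm_ring_1) \<Rightarrow> bool" where
  "is_hom h \<longleftrightarrow> (\<forall>x y. h (x + y) = h x + h y) \<and> (\<forall>x y. h (x * y) = h x * h y) \<and> h 1 = 1"

lemma hom_add: "is_hom h \<Longrightarrow> h (x + y) = h x + h y" by (simp add: is_hom_def)
lemma hom_mult: "is_hom h \<Longrightarrow> h (x * y) = h x * h y" by (simp add: is_hom_def)
lemma hom_1: "is_hom h \<Longrightarrow> h 1 = 1" by (simp add: is_hom_def)
lemma hom_0: "is_hom h \<Longrightarrow> h 0 = 0"
proof -
  assume H: "is_hom h"
  have "h (0 + 0) = h 0 + h 0" using hom_add[OF H] .
  then show ?thesis by simp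
qed
lemma hom_neg: "is_hom h \<Longrightarrow> h (- x) = - h x"
proof -
  assume H: "is_hom h"
  have "h (x + - x) = h x + h (- x)" using hom_add[OF H] .
  then have "h x + h (-x) = 0" using hom_0[OF H] by simp
  then show ?thesis by (simp add: eq_neg_iff_add_eq_0 add.commute)
qed
lemma hom_sum: "is_hom h \<Longrightarrow> h (sum f A) = (\<Sum>x\<in>A. h (f x))"
  by (induct A rule: infinite_finite_induct) (simp_all add: hom_0 hom_add)
lemma hom_prod: "is_hom h \<Longrightarrow> h (prod f A) = (\<Prod>x\<in>A. h (f x))"
  by (induct A rule: infinite_finite_induct) (simp_all add: hom_1 hom_mult)
lemma hom_eps: "is_hom h \<Longrightarrow> h (biquat_eps i j) = biquat_eps i j"
  by (simp add: biquat_eps_def hom_neg hom_1)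
lemma hom_mp: "is_hom h \<Longrightarrow> h (monprod sq biquat_eps S T) = monprod (h \<circ> sq) biquat_eps S T"
  by (simp add: monprod_def hom_mult hom_prod hom_eps)
lemma hom_gm: "is_hom h \<Longrightarrow>
   h (gen_mult n sq biquat_eps u v U) = gen_mult n (h \<circ> sq) biquat_eps (h \<circ> u) (h \<circ> v) U"
  by (cases "U \<subseteq> {..<n}") (simp_all add: gm_eq gm_out hom_sum hom_mult hom_mp hom_0)

definition supp_in :: "(nat set \<Rightarrow> 'a::zero) \<Rightarrow> nat set \<Rightarrow> bool" where
  "supp_in u J \<longleftrightarrow> (\<forall>S. \<not> S \<subseteq> J \<longrightarrow> u S = 0)"

definition ZD :: "nat \<Rightarrow> (nat \<Rightarrow> 'a::idom) \<Rightarrow> nat set \<Rightarrow> bool" where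
  "ZD n sq J \<longleftrightarrow> (\<forall>u v. supp_in u J \<longrightarrow> supp_in v J \<longrightarrow>
      gen_mult n sq biquat_eps u v = (\<lambda>_. 0) \<longrightarrow> u = (\<lambda>_. 0) \<or> v = (\<lambda>_. 0))"

definition evp :: "nat \<Rightarrow> (nat set \<Rightarrow> 'a::zero) \<Rightarrow> nat set \<Rightarrow> 'a" where
  "evp m u = (\<lambda>S. if m \<in> S then 0 else u S)"
definition odp :: "nat \<Rightarrow> (nat set \<Rightarrow> 'a::zero) \<Rightarrow> nat set \<Rightarrow> 'a" where
  "odp m u = (\<lambda>S. if m \<in> S then u S else 0)"

lemma evp_even: "evenm m (evp m u)" by (simp add: evenm_def evp_def)
lemma odp_odd: "oddm m (odp m u)" by (simp add: oddm_def odp_def)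
lemma evp_odp: "(u::nat set \<Rightarrow> 'a::monoid_add) = (\<lambda>S. evp m u S + odp m u S)" by (rule ext) (simp add: evp_def odp_def)

lemma gm_split:
  "gen_mult n sq eps u v U = gen_mult n sq eps (evp m u) (evp m v) U + gen_mult n sq eps (evp m u) (odp m v) U
     + gen_mult n sq eps (odp m u) (evp m v) U + gen_mult n sq eps (odp m u) (odp m v) U"
  apply (subst evp_odp[of u m], subst evp_odp[of v m])
  by (simp add: gm_add_left gm_add_right evp_def odp_def)

lemma sd_mem: "x \<in> sd S U \<longleftrightarrow> (x \<in> S) \<noteq> (x \<in> U)" by (auto simp: sd_def)

lemma par_ee: "evenm m a \<Longrightarrow> evenm m c \<Longrightarrow> m \<in> U \<Longrightarrow> gen_mult n sq eps a c U = 0"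
  by (rule gm_vanish) (metis sd_mem evenm_def oddm_def mult_zero_left mult_zero_right)
lemma par_oo: "oddm m a \<Longrightarrow> oddm m c \<Longrightarrow> m \<in> U \<Longrightarrow> gen_mult n sq eps a c U = 0"
  by (rule gm_vanish) (metis sd_mem evenm_def oddm_def mult_zero_left mult_zero_right)
lemma par_oe: "oddm m a \<Longrightarrow> evenm m c \<Longrightarrow> m \<notin> U \<Longrightarrow> gen_mult n sq eps a c U = 0"
  by (rule gm_vanish) (metis sd_mem evenm_def oddm_def mult_zero_left mult_zero_right)
lemma par_eo: "evenm m a \<Longrightarrow> oddm m c \<Longrightarrow> m \<notin> U \<Longrightarrow> gen_mult n sq eps a c U = 0"
  by (rule gm_vanish) (metis sd_mem evenm_def oddm_def mult_zero_left mult_zero_right)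

lemma shift_even: "evenm m (shift m a)" by (simp add: evenm_def shift_def)
lemma twL_even: "evenm m c \<Longrightarrow> evenm m (twL m eps c)" by (simp add: evenm_def twL_def)
lemma twR_even: "evenm m c \<Longrightarrow> evenm m (twR m eps c)" by (simp add: evenm_def twR_def)

lemma supp_shift: "supp_in a J \<Longrightarrow> supp_in (shift m a) (J - {m})"
  unfolding supp_in_def shift_def
proof (intro allI impI)
  fix S assume A: "\<forall>S. \<not> S \<subseteq> J \<longrightarrow> a S = 0" and B: "\<not> S \<subseteq> J - {m}"
  show "(if m \<in> S then 0 else a (insert m S)) = 0"
  proof (cases "m \<in> S")
    case False
    then have "\<not> insert m S \<subseteq> J" using B by blast
    then show ?thesis using A False by simp
  qed simp
qed
lemma supp_twL: "supp_in c K \<Longrightarrow> supp_in (twL m eps c) K"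
  unfolding supp_in_def twL_def by auto
lemma supp_twR: "supp_in c K \<Longrightarrow> supp_in (twR m eps c) K"
  unfolding supp_in_def twR_def by auto
lemma supp_evp: "supp_in u J \<Longrightarrow> supp_in (evp m u) (J - {m})"
  unfolding supp_in_def evp_def by auto
lemma supp_odp: "supp_in u J \<Longrightarrow> supp_in (odp m u) J"
  unfolding supp_in_def odp_def by auto

lemma hom_shift: "is_hom h \<Longrightarrow> h \<circ> shift m a = shift m (h \<circ> a)"
  by (auto simp: shift_def hom_0)
lemma hom_twL: "is_hom h \<Longrightarrow> h \<circ> twL m biquat_eps c = twL m biquat_eps (h \<circ> c)"
  by (auto simp: twL_def hom_mult hom_prod hom_eps)
lemma hom_twR: "is_hom h \<Longrightarrow> h \<circ> twR m biquat_eps c = twR m biquat_eps (h \<circ> c)"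
  by (auto simp: twR_def hom_mult hom_prod hom_eps)
lemma hom_evp: "is_hom h \<Longrightarrow> h \<circ> evp m u = evp m (h \<circ> u)"
  by (auto simp: evp_def hom_0)
lemma hom_odp: "is_hom h \<Longrightarrow> h \<circ> odp m u = odp m (h \<circ> u)"
  by (auto simp: odp_def hom_0)

lemma eps_nz: "biquat_eps i j \<noteq> (0::'a::idom)" by (simp add: biquat_eps_def)

lemma twL_zero: "twL m biquat_eps (c::nat set \<Rightarrow> 'a::idom) = (\<lambda>_. 0) \<Longrightarrow> c = (\<lambda>_. 0)"
proof
  fix S assume "twL m biquat_eps c = (\<lambda>_. 0)"
  then have "c S * (\<Prod>j\<in>{j\<in>S. j<m}. biquat_eps m j) = 0" unfolding twL_def by meson
  moreover have "(\<Prod>j\<in>{j\<in>S. j<m}. biquat_eps m j) \<noteq> (0::'a)"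
  proof -
    have fin: "finite {j\<in>S. j<m}" by (rule finite_subset[of _ "{..<m}"]) auto
    show ?thesis using prod_zero_iff[OF fin] eps_nz by metis
  qed
  ultimately show "c S = 0" by simp
qed

lemma twR_zero: "twR m biquat_eps (c::nat set \<Rightarrow> 'a::idom) = (\<lambda>_. 0) \<Longrightarrow> c = (\<lambda>_. 0)"
proof
  fix S assume "twR m biquat_eps c = (\<lambda>_. 0)"
  then have "c S * (\<Prod>i\<in>{i\<in>S. m<i}. biquat_eps i m) = 0" unfolding twR_def by meson
  moreover have "(\<Prod>i\<in>{i\<in>S. m<i}. biquat_eps i m) \<noteq> (0::'a)"
  proof (cases "finite {i\<in>S. m<i}")
    case True
    show ?thesis using prod_zero_iff[OF True] eps_nz by metis
  qed simp
  ultimately show "c S = 0" by simp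
qed

lemma shift_zero: "oddm m a \<Longrightarrow> shift m a = (\<lambda>_. 0) \<Longrightarrow> a = (\<lambda>_. 0)"
proof
  fix S assume o: "oddm m a" and s: "shift m a = (\<lambda>_. 0)"
  show "a S = 0"
  proof (cases "m \<in> S")
    case True
    have "shift m a (S - {m}) = 0" using s by meson
    then show ?thesis using True by (simp add: shift_def insert_absorb)
  next
    case False then show ?thesis using o by (simp add: oddm_def)
  qed
qed

lemma evod_zero: "evp m a = (\<lambda>_. 0) \<Longrightarrow> odp m a = (\<lambda>_. (0::'a::monoid_add)) \<Longrightarrow> a = (\<lambda>_. 0)"
  by (subst evp_odp[of a m]) simp

lemma prim:
  fixes u :: "nat set \<Rightarrow> 'a::idom"
  assumes fin: "\<And>r. r \<noteq> 0 \<Longrightarrow> \<exists>N. \<not> p ^ N dvd r" and nz: "u \<noteq> (\<lambda>_. 0)"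
  shows "\<exists>k u'. (\<forall>S. u S = p ^ k * u' S) \<and> \<not> (\<forall>S. p dvd u' S)"
proof -
  obtain S0 where S0: "u S0 \<noteq> 0" using nz by meson
  obtain N where N: "\<not> p ^ N dvd u S0" using fin[OF S0] by blast
  let ?K = "{k. \<forall>S. p ^ k dvd u S}"
  have K0: "0 \<in> ?K" by simp
  have Kb: "?K \<subseteq> {..<N}"
  proof
    fix k assume k: "k \<in> ?K"
    show "k \<in> {..<N}"
    proof (rule ccontr)
      assume "k \<notin> {..<N}"
      then have "p ^ N dvd p ^ k" by (simp add: le_imp_power_dvd)
      moreover have "p ^ k dvd u S0" using k by simp
      ultimately show False using N dvd_trans by blast
    qed
  qed
  have Kf: "finite ?K" using Kb finite_subset by blast
  define k where "k = Max ?K"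
  have kK: "k \<in> ?K" unfolding k_def using Kf K0 Max_in by blast
  have kS: "Suc k \<notin> ?K"
  proof
    assume "Suc k \<in> ?K"
    then have "Suc k \<le> k" unfolding k_def using Kf Max_ge by blast
    then show False by simp
  qed
  have "\<forall>S. \<exists>c. u S = p ^ k * c" using kK by (auto simp: dvd_def)
  then obtain u' where u': "\<forall>S. u S = p ^ k * u' S" by metis
  have "\<not> (\<forall>S. p dvd u' S)"
  proof
    assume "\<forall>S. p dvd u' S"
    then have "\<forall>S. p ^ Suc k dvd u S" using u' by (metis mult_dvd_mono power_Suc2 dvd_refl mult.commute)
    then show False using kS by simp
  qed
  then show ?thesis using u' by blast
qed

lemma fun_zeroI: "(\<And>U. f U = 0) \<Longrightarrow> f = (\<lambda>_. 0)" by (rule ext) simp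

lemma core:
  fixes h :: "'a::idom \<Rightarrow> 'b::idom" and sq :: "nat \<Rightarrow> 'a" and u v :: "nat set \<Rightarrow> 'a"
  assumes hom: "is_hom h"
    and ker: "\<And>r. h r = 0 \<Longrightarrow> p dvd r"
    and p0: "p \<noteq> 0" and hp: "h p = 0"
    and sqm: "sq m = p * w" and hw: "h w \<noteq> 0"
    and mJ: "m \<in> J" and Jn: "J \<subseteq> {..<n}"
    and Zres: "ZD n (h \<circ> sq) (J - {m})"
    and su: "supp_in u J" and sv: "supp_in v J"
    and uv: "gen_mult n sq biquat_eps u v = (\<lambda>_. 0)"
    and pu: "\<not> (\<forall>S. p dvd u S)" and pv: "\<not> (\<forall>S. p dvd v S)"
  shows False
proof -
  have mn: "m < n" using mJ Jn by auto
  let ?g = "gen_mult n sq biquat_eps"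
  let ?gb = "gen_mult n (h \<circ> sq) biquat_eps"
  define u0 where "u0 = evp m u"
  define u1 where "u1 = odp m u"
  define v0 where "v0 = evp m v"
  define v1 where "v1 = odp m v"
  define A0 where "A0 = evp m (h \<circ> u)"
  define A1 where "A1 = odp m (h \<circ> u)"
  define B0 where "B0 = evp m (h \<circ> v)"
  define B1 where "B1 = odp m (h \<circ> v)"
  have hu0: "h \<circ> u0 = A0" "h \<circ> u1 = A1" "h \<circ> v0 = B0" "h \<circ> v1 = B1"
    unfolding u0_def u1_def v0_def v1_def A0_def A1_def B0_def B1_def
    by (simp_all add: hom_evp hom_odp hom)
  have eo: "evenm m u0" "evenm m v0" "oddm m u1" "oddm m v1"
           "evenm m A0" "evenm m B0" "oddm m A1" "oddm m B1"
    unfolding u0_def u1_def v0_def v1_def A0_def A1_def B0_def B1_def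
    by (simp_all add: evp_even odp_odd)
  have shu: "supp_in (h \<circ> u) J" "supp_in (h \<circ> v) J"
    using su sv hom_0[OF hom] by (auto simp: supp_in_def)
  have sp: "supp_in A0 (J - {m})" "supp_in B0 (J - {m})" "supp_in A1 J" "supp_in B1 J"
    unfolding A0_def B0_def A1_def B1_def using shu by (simp_all add: supp_evp supp_odp)
  have Hu: "h \<circ> u \<noteq> (\<lambda>_. 0)"
  proof
    assume "h \<circ> u = (\<lambda>_. 0)"
    then have "\<forall>S. p dvd u S" using ker by (metis comp_apply)
    then show False using pu by blast
  qed
  have Hv: "h \<circ> v \<noteq> (\<lambda>_. 0)"
  proof
    assume "h \<circ> v = (\<lambda>_. 0)"
    then have "\<forall>S. p dvd v S" using ker by (metis comp_apply)
    then show False using pv by blast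
  qed
  have split: "\<And>U. ?g u0 v0 U + ?g u0 v1 U + ?g u1 v0 U + ?g u1 v1 U = 0"
    using gm_split[of n sq biquat_eps u v _ m] uv unfolding u0_def u1_def v0_def v1_def by metis
  have ev_rel: "\<And>U. m \<notin> U \<Longrightarrow> ?g u0 v0 U + ?g u1 v1 U = 0"
    using split par_eo[OF eo(1) eo(4)] par_oe[OF eo(3) eo(2)] by (metis add_0_right)
  have od_rel: "\<And>U. m \<in> U \<Longrightarrow> ?g u0 v1 U + ?g u1 v0 U = 0"
    using split par_ee[OF eo(1) eo(2)] par_oo[OF eo(3) eo(4)] by (metis add_0_left add_0_right)
  have S3': "\<And>U. m \<notin> U \<Longrightarrow> ?g u1 v1 U = sq m * ?g (twR m biquat_eps (shift m u1)) (twL m biquat_eps (shift m v1)) U"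
    using S3[OF eo(3) eo(4) mn] by blast
  have hod: "\<And>U. m \<in> U \<Longrightarrow> ?gb A0 B1 U + ?gb A1 B0 U = 0"
  proof -
    fix U assume "m \<in> U"
    then have "h (?g u0 v1 U + ?g u1 v0 U) = 0" using od_rel hom_0[OF hom] by simp
    then show "?gb A0 B1 U + ?gb A1 B0 U = 0"
      by (simp add: hom_add[OF hom] hom_gm[OF hom] hu0)
  qed
  have stepA: "?gb A0 B0 = (\<lambda>_. 0)"
  proof (rule fun_zeroI)
    fix U show "?gb A0 B0 U = 0"
    proof (cases "m \<in> U")
      case True then show ?thesis by (rule par_ee[OF eo(5) eo(6)])
    next
      case False
      have "h (?g u0 v0 U + ?g u1 v1 U) = 0" using ev_rel[OF False] hom_0[OF hom] by simp
      moreover have "h (?g u1 v1 U) = 0"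
        unfolding S3'[OF False] sqm by (simp add: hom_mult[OF hom] hp)
      ultimately show ?thesis by (simp add: hom_add[OF hom] hom_gm[OF hom] hu0)
    qed
  qed
  have A: "A0 = (\<lambda>_. 0) \<or> B0 = (\<lambda>_. 0)"
    using Zres sp(1,2) stepA unfolding ZD_def by blast
  have Hv_nz: "B0 = (\<lambda>_. 0) \<Longrightarrow> B1 \<noteq> (\<lambda>_. 0)"
    using Hv evod_zero unfolding B0_def B1_def by blast
  have Hu_nz: "A0 = (\<lambda>_. 0) \<Longrightarrow> A1 \<noteq> (\<lambda>_. 0)"
    using Hu evod_zero unfolding A0_def A1_def by blast
  have B: "B0 = (\<lambda>_. 0) \<Longrightarrow> A0 = (\<lambda>_. 0)"
  proof -
    assume b0: "B0 = (\<lambda>_. 0)"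
    have z: "\<And>U. m \<in> U \<Longrightarrow> ?gb A0 B1 U = 0"
      using hod b0 gm_zero_right by (metis add_0_right)
    have "?gb (twR m biquat_eps A0) (shift m B1) = (\<lambda>_. 0)"
    proof (rule fun_zeroI)
      fix U show "?gb (twR m biquat_eps A0) (shift m B1) U = 0"
      proof (cases "m \<in> U")
        case True then show ?thesis by (rule par_ee[OF twR_even[OF eo(5)] shift_even])
      next
        case False
        then show ?thesis using S2[OF eo(8) eo(5) mn False, where sq="h \<circ> sq" and eps=biquat_eps] z[of "insert m U"] by simp
      qed
    qed
    moreover have "supp_in (twR m biquat_eps A0) (J - {m})" using sp(1) by (rule supp_twR)
    moreover have "supp_in (shift m B1) (J - {m})" using sp(4) by (rule supp_shift)
    ultimately have "twR m biquat_eps A0 = (\<lambda>_. 0) \<or> shift m B1 = (\<lambda>_. 0)"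
      using Zres unfolding ZD_def by blast
    then show "A0 = (\<lambda>_. 0)" using twR_zero shift_zero[OF eo(8)] Hv_nz[OF b0] by blast
  qed
  have C: "A0 = (\<lambda>_. 0) \<Longrightarrow> B0 = (\<lambda>_. 0)"
  proof -
    assume a0: "A0 = (\<lambda>_. 0)"
    have z: "\<And>U. m \<in> U \<Longrightarrow> ?gb A1 B0 U = 0"
      using hod a0 gm_zero_left by (metis add_0_left)
    have "?gb (shift m A1) (twL m biquat_eps B0) = (\<lambda>_. 0)"
    proof (rule fun_zeroI)
      fix U show "?gb (shift m A1) (twL m biquat_eps B0) U = 0"
      proof (cases "m \<in> U")
        case True then show ?thesis by (rule par_ee[OF shift_even twL_even[OF eo(6)]])
      next
        case False
        then show ?thesis using S1[OF eo(7) mn False, where sq="h \<circ> sq" and eps=biquat_eps and c=B0] z[of "insert m U"] by simp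
      qed
    qed
    moreover have "supp_in (twL m biquat_eps B0) (J - {m})" using sp(2) by (rule supp_twL)
    moreover have "supp_in (shift m A1) (J - {m})" using sp(3) by (rule supp_shift)
    ultimately have "shift m A1 = (\<lambda>_. 0) \<or> twL m biquat_eps B0 = (\<lambda>_. 0)"
      using Zres unfolding ZD_def by blast
    then show "B0 = (\<lambda>_. 0)" using twL_zero shift_zero[OF eo(7)] Hu_nz[OF a0] by blast
  qed
  have a0: "A0 = (\<lambda>_. 0)" and b0: "B0 = (\<lambda>_. 0)" using A B C by blast+
  have "\<forall>S. \<exists>c. u0 S = p * c"
  proof
    fix S
    have "h (u0 S) = 0" using a0 hu0(1) by (metis comp_apply)
    then show "\<exists>c. u0 S = p * c" using ker by (auto simp: dvd_def)
  qed
  then obtain u0' where u0': "\<And>S. u0 S = p * u0' S" by metis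
  have "\<forall>S. \<exists>c. v0 S = p * c"
  proof
    fix S
    have "h (v0 S) = 0" using b0 hu0(3) by (metis comp_apply)
    then show "\<exists>c. v0 S = p * c" using ker by (auto simp: dvd_def)
  qed
  then obtain v0' where v0': "\<And>S. v0 S = p * v0' S" by metis
  have u0eq: "u0 = (\<lambda>S. p * u0' S)" and v0eq: "v0 = (\<lambda>S. p * v0' S)" using u0' v0' by auto
  let ?G = "?g (twR m biquat_eps (shift m u1)) (twL m biquat_eps (shift m v1))"
  let ?Gb = "?gb (twR m biquat_eps (shift m A1)) (twL m biquat_eps (shift m B1))"
  have hG: "h \<circ> (twR m biquat_eps (shift m u1)) = twR m biquat_eps (shift m A1)"
           "h \<circ> (twL m biquat_eps (shift m v1)) = twL m biquat_eps (shift m B1)"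
    by (simp_all add: hom_twR[OF hom] hom_twL[OF hom] hom_shift[OF hom] hu0)
  have "?Gb = (\<lambda>_. 0)"
  proof (rule fun_zeroI)
    fix U show "?Gb U = 0"
    proof (cases "m \<in> U")
      case True then show ?thesis
        by (rule par_ee[OF twR_even[OF shift_even] twL_even[OF shift_even]])
    next
      case False
      have "p * (p * ?g u0' v0' U) + p * (w * ?G U) = 0"
        using ev_rel[OF False] S3'[OF False] unfolding u0eq v0eq sqm
        by (simp add: gm_scal_left gm_scal_right algebra_simps)
      then have "p * (p * ?g u0' v0' U + w * ?G U) = 0" by (simp add: algebra_simps)
      then have "p * ?g u0' v0' U + w * ?G U = 0" using p0 by simp
      then have "h (p * ?g u0' v0' U + w * ?G U) = 0" using hom_0[OF hom] by simp
      then have "h w * h (?G U) = 0" by (simp add: hom_add[OF hom] hom_mult[OF hom] hp)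
      then have "h (?G U) = 0" using hw by simp
      then show ?thesis by (simp add: hom_gm[OF hom] hG)
    qed
  qed
  moreover have "supp_in (twR m biquat_eps (shift m A1)) (J - {m})"
    using sp(3) by (intro supp_twR supp_shift)
  moreover have "supp_in (twL m biquat_eps (shift m B1)) (J - {m})"
    using sp(4) by (intro supp_twL supp_shift)
  ultimately have "twR m biquat_eps (shift m A1) = (\<lambda>_. 0) \<or> twL m biquat_eps (shift m B1) = (\<lambda>_. 0)"
    using Zres unfolding ZD_def by blast
  then have "A1 = (\<lambda>_. 0) \<or> B1 = (\<lambda>_. 0)"
    using twR_zero twL_zero shift_zero[OF eo(7)] shift_zero[OF eo(8)] by blast
  then show False using Hu_nz[OF a0] Hv_nz[OF b0] by blast
qed

lemma descent:
  fixes h :: "'a::idom \<Rightarrow> 'b::idom" and sq :: "nat \<Rightarrow> 'a"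
  assumes hom: "is_hom h"
    and ker: "\<And>r. h r = 0 \<Longrightarrow> p dvd r"
    and p0: "p \<noteq> 0" and hp: "h p = 0"
    and sqm: "sq m = p * w" and hw: "h w \<noteq> 0"
    and fin: "\<And>r. r \<noteq> 0 \<Longrightarrow> \<exists>N. \<not> p ^ N dvd r"
    and mJ: "m \<in> J" and Jn: "J \<subseteq> {..<n}"
    and Zres: "ZD n (h \<circ> sq) (J - {m})"
  shows "ZD n sq J"
  unfolding ZD_def
proof (intro allI impI)
  fix u v :: "nat set \<Rightarrow> 'a"
  assume su: "supp_in u J" and sv: "supp_in v J" and uv: "gen_mult n sq biquat_eps u v = (\<lambda>_. 0)"
  show "u = (\<lambda>_. 0) \<or> v = (\<lambda>_. 0)"
  proof (rule ccontr)
    assume "\<not> (u = (\<lambda>_. 0) \<or> v = (\<lambda>_. 0))"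
    then have un: "u \<noteq> (\<lambda>_. 0)" and vn: "v \<noteq> (\<lambda>_. 0)" by auto
    obtain k u' where u': "\<forall>S. u S = p ^ k * u' S" and pu: "\<not> (\<forall>S. p dvd u' S)"
      using prim[OF fin un] by blast
    obtain l v' where v': "\<forall>S. v S = p ^ l * v' S" and pv: "\<not> (\<forall>S. p dvd v' S)"
      using prim[OF fin vn] by blast
    have pk: "p ^ k \<noteq> 0" "p ^ l \<noteq> 0" using p0 by auto
    have su': "supp_in u' J" using su u' pk unfolding supp_in_def by (metis mult_eq_0_iff)
    have sv': "supp_in v' J" using sv v' pk unfolding supp_in_def by (metis mult_eq_0_iff)
    have ueq: "u = (\<lambda>S. p ^ k * u' S)" and veq: "v = (\<lambda>S. p ^ l * v' S)" using u' v' by auto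
    have "gen_mult n sq biquat_eps u' v' = (\<lambda>_. 0)"
    proof (rule fun_zeroI)
      fix U
      have "gen_mult n sq biquat_eps (\<lambda>S. p ^ k * u' S) (\<lambda>S. p ^ l * v' S) U = 0"
        using uv ueq veq by simp
      then have "p ^ k * (p ^ l * gen_mult n sq biquat_eps u' v' U) = 0"
        by (simp only: gm_scal_left gm_scal_right)
      then show "gen_mult n sq biquat_eps u' v' U = 0" using pk p0 by simp
    qed
    then show False
      using core[OF hom ker p0 hp sqm hw mJ Jn Zres su' sv' _ pu pv] by blast
  qed
qed

lemma base: "ZD n (sq :: nat \<Rightarrow> 'a::idom) {}"
  unfolding ZD_def
proof (intro allI impI)
  fix u v :: "nat set \<Rightarrow> 'a"
  assume su: "supp_in u {}" and sv: "supp_in v {}" and uv: "gen_mult n sq biquat_eps u v = (\<lambda>_. 0)"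
  have us: "\<And>S. S \<noteq> {} \<Longrightarrow> u S = 0" using su by (auto simp: supp_in_def)
  have vs: "\<And>S. S \<noteq> {} \<Longrightarrow> v S = 0" using sv by (auto simp: supp_in_def)
  have "gen_mult n sq biquat_eps u v {} = (\<Sum>S\<in>Pow {..<n}. u S * v (sd S {}) * monprod sq biquat_eps S (sd S {}))"
    by (rule gm_eq) simp
  also have "\<dots> = u {} * v (sd {} {}) * monprod sq biquat_eps {} (sd {} {})"
  proof -
    have "(\<Sum>S\<in>Pow {..<n}. u S * v (sd S {}) * monprod sq biquat_eps S (sd S {})) =
       u {} * v (sd {} {}) * monprod sq biquat_eps {} (sd {} {}) +
       (\<Sum>S\<in>Pow {..<n} - {{}}. u S * v (sd S {}) * monprod sq biquat_eps S (sd S {}))"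
      by (rule sum.remove) auto
    moreover have "(\<Sum>S\<in>Pow {..<n} - {{}}. u S * v (sd S {}) * monprod sq biquat_eps S (sd S {})) = 0"
      using us by (intro sum.neutral) auto
    ultimately show ?thesis by simp
  qed
  also have "\<dots> = u {} * v {}" by (simp add: sd_def monprod_def)
  finally have "u {} * v {} = 0" using uv by metis
  then have "u {} = 0 \<or> v {} = 0" by simp
  then show "u = (\<lambda>_. 0) \<or> v = (\<lambda>_. 0)" using us vs by (metis ext)
qed

lemma hom_map_poly:
  fixes f :: "'a::comm_ring_1 \<Rightarrow> 'b::comm_ring_1"
  assumes f: "is_hom f" shows "is_hom (map_poly f)"
proof -
  have f0: "f 0 = 0" by (rule hom_0[OF f])
  have "map_poly f (p + q) = map_poly f p + map_poly f q" for p q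
    by (rule poly_eqI) (simp add: coeff_map_poly f0 hom_add[OF f])
  moreover have "map_poly f (p * q) = map_poly f p * map_poly f q" for p q
    by (rule poly_eqI) (simp add: coeff_map_poly f0 coeff_mult hom_sum[OF f] hom_mult[OF f])
  moreover have "map_poly f 1 = 1" by (simp add: hom_1[OF f])
  ultimately show ?thesis unfolding is_hom_def by blast
qed

lemma hom_eval: "is_hom (\<lambda>r. poly r (c::'a::comm_ring_1))"
  unfolding is_hom_def by simp

lemma ker_map_poly0:
  fixes r :: "'a::idom poly poly"
  assumes "map_poly (\<lambda>x. poly x 0) r = 0"
  shows "[:[:0, 1:]:] dvd r"
proof -
  have "\<forall>n. [:0,1:] dvd coeff r n"
  proof
    fix n
    have "coeff (map_poly (\<lambda>x. poly x 0) r) n = 0" using assms by simp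
    then have "poly (coeff r n) 0 = 0" by (simp add: coeff_map_poly)
    then show "[:0,1:] dvd coeff r n" using poly_eq_0_iff_dvd[of "coeff r n" 0] by simp
  qed
  then show ?thesis by (simp add: const_poly_dvd_iff)
qed

lemma ker_eval:
  fixes r :: "'a::idom poly"
  shows "poly r c = 0 \<Longrightarrow> [:-c, 1:] dvd r"
  using poly_eq_0_iff_dvd by blast

lemma const_pow: "[:c:] ^ N = [:c ^ N:]"
  by (induct N) (simp_all add: mult.commute)

lemma fin_const:
  fixes r :: "'a::idom poly poly"
  assumes "r \<noteq> 0"
  shows "\<exists>N. \<not> [:[:0, 1:]:] ^ N dvd r"
proof -
  obtain i where i: "coeff r i \<noteq> 0" using assms by (metis leading_coeff_0_iff)
  have "\<not> [:[:0, 1:]:] ^ Suc (degree (coeff r i)) dvd r"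
  proof
    assume "[:[:0, 1:]:] ^ Suc (degree (coeff r i)) dvd r"
    then have "[:[:0, 1:] ^ Suc (degree (coeff r i)):] dvd r" by (simp add: const_pow)
    then have "[:0, 1:] ^ Suc (degree (coeff r i)) dvd coeff r i" by (simp add: const_poly_dvd_iff)
    from dvd_imp_degree_le[OF this i] show False by (simp add: degree_power_eq)
  qed
  then show ?thesis by blast
qed

lemma fin_lin:
  fixes r :: "'a::idom poly"
  assumes "r \<noteq> 0"
  shows "\<exists>N. \<not> [:a, 1:] ^ N dvd r"
proof -
  have "\<not> [:a, 1:] ^ Suc (degree r) dvd r"
  proof
    assume "[:a, 1:] ^ Suc (degree r) dvd r"
    from dvd_imp_degree_le[OF this assms] show False by (simp only: degree_linear_power)
  qed
  then show ?thesis by blast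
qed

type_synonym R4 = "rat poly poly poly poly"
type_synonym R3 = "rat poly poly poly"
type_synonym R2 = "rat poly poly"
type_synonym R1 = "rat poly"

definition T4r :: R4 where "T4r = [:0, 1:]"
definition T3r :: R4 where "T3r = [:[:0, 1:]:]"
definition T2r :: R4 where "T2r = [:[:[:0, 1:]:]:]"
definition T1r :: R4 where "T1r = [:[:[:[:0, 1:]:]:]:]"

definition sq4 :: "nat \<Rightarrow> R4 poly" where
  "sq4 i = (if i = 0 then [:0, 1:] else if i = 1 then [:T3r:] else if i = 2 then [:- T1r, 1:]
     else if i = 3 then [:T4r:] else [:0, 1:] * [:- T1r, 1:] * [:- T2r, 1:])"

definition h1 :: "R4 poly \<Rightarrow> R3 poly" where "h1 = map_poly (\<lambda>x. poly x 0)"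
definition h2 :: "R3 poly \<Rightarrow> R2 poly" where "h2 = map_poly (\<lambda>x. poly x 0)"
definition h3 :: "R2 poly \<Rightarrow> R2" where "h3 = (\<lambda>r. poly r [:0, 1:])"
definition h4 :: "R2 \<Rightarrow> R1" where "h4 = (\<lambda>r. poly r 0)"
definition h5 :: "R1 \<Rightarrow> rat" where "h5 = (\<lambda>r. poly r 0)"

definition "sq3 = h1 \<circ> sq4"
definition "sq2 = h2 \<circ> sq3"
definition "sqC = h3 \<circ> sq2"
definition "sqB = h4 \<circ> sqC"
definition "sqQ = h5 \<circ> sqB"

lemma homs: "is_hom h1" "is_hom h2" "is_hom h3" "is_hom h4" "is_hom h5"
  unfolding h1_def h2_def h3_def h4_def h5_def
  by (simp_all add: hom_map_poly hom_eval)

lemma h1_mult: "h1 (a * b) = h1 a * h1 b" using homs(1) by (rule hom_mult)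
lemma h2_mult: "h2 (a * b) = h2 a * h2 b" using homs(2) by (rule hom_mult)
lemma h1_pC: "h1 (pCons a p) = pCons (poly a 0) (h1 p)" unfolding h1_def by (rule map_poly_pCons) simp
lemma h2_pC: "h2 (pCons a p) = pCons (poly a 0) (h2 p)" unfolding h2_def by (rule map_poly_pCons) simp
lemma h1_0: "h1 0 = 0" unfolding h1_def by simp
lemma h2_0: "h2 0 = 0" unfolding h2_def by simp

lemma v3: "sq3 1 = [:[:0, 1:]:]"
  by (simp add: sq3_def sq4_def h1_pC h1_0 T3r_def)
lemma v2: "sq2 4 = [:0, 1:] * [:- [:[:0,1:]:], 1:] * [:- [:0, 1:], 1:]"
  by (simp add: sq2_def sq3_def sq4_def h1_pC h1_0 h2_pC h2_0 h1_mult h2_mult T1r_def T2r_def)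

lemma vC: "sqC 0 = [:0, 1:] * 1"
  by (simp add: sqC_def sq2_def sq3_def sq4_def h1_pC h1_0 h2_pC h2_0 h3_def)
lemma vB: "sqB 2 = [:0, 1:] * (-1)"
  by (simp add: sqB_def sqC_def sq2_def sq3_def sq4_def h1_pC h1_0 h2_pC h2_0 h3_def h4_def T1r_def)

lemma Z5: "ZD 5 sqQ {}" by (rule base)

lemma Z4: "ZD 5 sqB {2}"
proof (rule descent[where h=h5 and p="[:0,1:]" and w="-1" and m=2])
  show "ZD 5 (h5 \<circ> sqB) ({2} - {2})" using Z5 by (simp add: sqQ_def)
  show "\<And>r. h5 r = 0 \<Longrightarrow> [:0, 1:] dvd r" unfolding h5_def using ker_eval[of _ 0] by simp
  show "\<And>r::R1. r \<noteq> 0 \<Longrightarrow> \<exists>N. \<not> [:0, 1:] ^ N dvd r" by (rule fin_lin)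
  show "is_hom h5" by (rule homs)
  show "[:0, 1:] \<noteq> (0::R1)" by simp
  show "h5 [:0, 1:] = 0" by (simp add: h5_def)
  show "sqB 2 = [:0, 1:] * - 1" by (rule vB)
  show "h5 (- 1) \<noteq> 0" by (simp add: h5_def)
  show "(2::nat) \<in> {2}" by simp
  show "{2::nat} \<subseteq> {..<5}" by simp
qed

lemma Z3: "ZD 5 sqC {0, 2}"
proof (rule descent[where h=h4 and p="[:0,1:]" and w="1" and m=0])
  show "ZD 5 (h4 \<circ> sqC) ({0, 2} - {0})" using Z4 by (simp add: sqB_def)
  show "\<And>r. h4 r = 0 \<Longrightarrow> [:0, 1:] dvd r" unfolding h4_def using ker_eval[of _ 0] by simp
  show "\<And>r::R2. r \<noteq> 0 \<Longrightarrow> \<exists>N. \<not> [:0, 1:] ^ N dvd r" by (rule fin_lin)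
  show "is_hom h4" by (rule homs)
  show "[:0, 1:] \<noteq> (0::R2)" by simp
  show "h4 [:0, 1:] = 0" by (simp add: h4_def)
  show "sqC 0 = [:0, 1:] * 1" by (rule vC)
  show "h4 1 \<noteq> 0" by (simp add: h4_def)
  show "(0::nat) \<in> {0, 2}" by simp
  show "{0, 2::nat} \<subseteq> {..<5}" by simp
qed

lemma Z2: "ZD 5 sq2 {0, 2, 4}"
proof (rule descent[where h=h3 and p="[:- [:0, 1:], 1:]" and w="[:0, 1:] * [:- [:[:0,1:]:], 1:]" and m=4])
  have e: "{0, 2, 4} - {4} = {0, 2::nat}" by auto
  show "ZD 5 (h3 \<circ> sq2) ({0, 2, 4} - {4})" unfolding e using Z3 by (simp add: sqC_def)
  show "\<And>r. h3 r = 0 \<Longrightarrow> [:- [:0, 1:], 1:] dvd r" unfolding h3_def using ker_eval by blast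
  show "\<And>r::R2 poly. r \<noteq> 0 \<Longrightarrow> \<exists>N. \<not> [:- [:0, 1:], 1:] ^ N dvd r" by (rule fin_lin)
  show "sq2 4 = [:- [:0, 1:], 1:] * ([:0, 1:] * [:- [:[:0,1:]:], 1:])" by (simp add: v2 ac_simps)
  show "h3 ([:0, 1:] * [:- [:[:0,1:]:], 1:]) \<noteq> 0" by (simp add: h3_def)
  show "is_hom h3" by (rule homs)
  show "[:- [:0, 1:], 1:] \<noteq> (0::R2 poly)" by simp
  show "h3 [:- [:0, 1:], 1:] = 0" by (simp add: h3_def)
  show "(4::nat) \<in> {0, 2, 4}" by simp
  show "{0, 2, 4::nat} \<subseteq> {..<5}" by simp
qed

lemma Z1: "ZD 5 sq3 {0, 1, 2, 4}"
proof (rule descent[where h=h2 and p="[:[:0, 1:]:]" and w="1" and m=1])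
  have e: "{0, 1, 2, 4} - {1} = {0, 2, 4::nat}" by auto
  show "ZD 5 (h2 \<circ> sq3) ({0, 1, 2, 4} - {1})" unfolding e using Z2 by (simp add: sq2_def)
  show "\<And>r. h2 r = 0 \<Longrightarrow> [:[:0, 1:]:] dvd r" unfolding h2_def by (rule ker_map_poly0)
  show "\<And>r::R3 poly. r \<noteq> 0 \<Longrightarrow> \<exists>N. \<not> [:[:0, 1:]:] ^ N dvd r" by (rule fin_const)
  show "is_hom h2" by (rule homs)
  show "[:[:0, 1:]:] \<noteq> (0::R3 poly)" by simp
  show "h2 [:[:0, 1:]:] = 0" by (simp add: h2_pC h2_0)
  show "sq3 1 = [:[:0, 1:]:] * 1" unfolding mult_1_right by (rule v3)
  show "h2 1 \<noteq> 0" by (simp add: h2_def)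
  show "(1::nat) \<in> {0, 1, 2, 4}" by simp
  show "{0, 1, 2, 4::nat} \<subseteq> {..<5}" by simp
qed

lemma Z0: "ZD 5 sq4 {0, 1, 2, 3, 4}"
proof (rule descent[where h=h1 and p="[:[:0, 1:]:]" and w="1" and m=3])
  have e: "{0, 1, 2, 3, 4} - {3} = {0, 1, 2, 4::nat}" by auto
  show "ZD 5 (h1 \<circ> sq4) ({0, 1, 2, 3, 4} - {3})" unfolding e using Z1 by (simp add: sq3_def)
  show "\<And>r. h1 r = 0 \<Longrightarrow> [:[:0, 1:]:] dvd r" unfolding h1_def by (rule ker_map_poly0)
  show "\<And>r::R4 poly. r \<noteq> 0 \<Longrightarrow> \<exists>N. \<not> [:[:0, 1:]:] ^ N dvd r" by (rule fin_const)
  show "is_hom h1" by (rule homs)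
  show "[:[:0, 1:]:] \<noteq> (0::R4 poly)" by simp
  show "h1 [:[:0, 1:]:] = 0" by (simp add: h1_pC h1_0)
  show "sq4 3 = [:[:0, 1:]:] * 1" by (simp add: sq4_def T4r_def)
  show "h1 1 \<noteq> 0" by (simp add: h1_def)
  show "(3::nat) \<in> {0, 1, 2, 3, 4}" by simp
  show "{0, 1, 2, 3, 4::nat} \<subseteq> {..<5}" by simp
qed

lemma eps_sq: "biquat_eps i j * biquat_eps i j = (1::'a::comm_ring_1)"
  by (simp add: biquat_eps_def)

lemma prod_sd_mult:
  fixes g :: "nat \<Rightarrow> 'a::comm_ring_1"
  assumes g: "\<And>i. g i * g i = 1" and f: "finite S" "finite S'"
  shows "prod g S * prod g S' = prod g (sd S S')"
proof -
  have A: "prod g S = prod g (S - S') * prod g (S \<inter> S')"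
    using f by (subst prod.union_disjoint[symmetric]) (auto intro: prod.cong)
  have B: "prod g S' = prod g (S' - S) * prod g (S \<inter> S')"
    using f by (subst prod.union_disjoint[symmetric]) (auto intro: prod.cong)
  have C: "prod g (sd S S') = prod g (S - S') * prod g (S' - S)"
    unfolding sd_def using f by (subst prod.union_disjoint) auto
  have D: "prod g (S \<inter> S') * prod g (S \<inter> S') = 1"
    by (subst prod.distrib[symmetric]) (simp add: g)
  show ?thesis unfolding A B C by (simp add: D algebra_simps)
qed

definition epsP :: "nat set \<Rightarrow> nat set \<Rightarrow> 'a::comm_ring_1" where
  "epsP S T = (\<Prod>p\<in>{(i,j). i \<in> S \<and> j \<in> T \<and> j < i}. biquat_eps (fst p) (snd p))"

lemma epsP_left:
  assumes "finite S" "finite T"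
  shows "epsP S T = (\<Prod>i\<in>S. \<Prod>j\<in>{j\<in>T. j < i}. (biquat_eps i j :: 'a::comm_ring_1))"
proof -
  have "{(i,j). i \<in> S \<and> j \<in> T \<and> j < i} = Sigma S (\<lambda>i. {j\<in>T. j < i})" by auto
  moreover have "(\<Prod>i\<in>S. \<Prod>j\<in>{j\<in>T. j < i}. (biquat_eps i j :: 'a)) =
     (\<Prod>p\<in>Sigma S (\<lambda>i. {j\<in>T. j < i}). biquat_eps (fst p) (snd p))"
    by (subst prod.Sigma) (use assms in \<open>auto simp: case_prod_unfold\<close>)
  ultimately show ?thesis unfolding epsP_def by simp
qed

lemma epsP_right:
  assumes "finite S" "finite T"
  shows "epsP S T = (\<Prod>j\<in>T. \<Prod>i\<in>{i\<in>S. j < i}. (biquat_eps i j :: 'a::comm_ring_1))"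
proof -
  have "{(i,j). i \<in> S \<and> j \<in> T \<and> j < i} = (\<lambda>(j,i). (i,j)) ` Sigma T (\<lambda>j. {i\<in>S. j < i})" by auto
  moreover have "inj_on (\<lambda>(j,i). (i::nat,j::nat)) (Sigma T (\<lambda>j. {i\<in>S. j < i}))" by (auto simp: inj_on_def)
  moreover have "(\<Prod>j\<in>T. \<Prod>i\<in>{i\<in>S. j < i}. (biquat_eps i j :: 'a)) =
     (\<Prod>p\<in>Sigma T (\<lambda>j. {i\<in>S. j < i}). biquat_eps (snd p) (fst p))"
    by (subst prod.Sigma) (use assms in \<open>auto simp: case_prod_unfold\<close>)
  ultimately show ?thesis unfolding epsP_def
    by (simp add: prod.reindex case_prod_unfold)
qed

lemma prod_prod_sq1:
  assumes "finite A" "\<And>i. g i * g i = (1::'a::comm_ring_1)"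
  shows "(\<Prod>x\<in>A. g x) * (\<Prod>x\<in>A. g x) = 1"
  using assms by (subst prod.distrib[symmetric]) simp

lemma epsP_sd_left:
  assumes "finite S" "finite S'" "finite T"
  shows "epsP S T * epsP S' T = (epsP (sd S S') T :: 'a::comm_ring_1)"
proof -
  have fs: "finite (sd S S')" using assms unfolding sd_def by auto
  show ?thesis
    unfolding epsP_left[OF assms(1,3)] epsP_left[OF assms(2,3)] epsP_left[OF fs assms(3)]
    by (rule prod_sd_mult[OF _ assms(1,2)]) (rule prod_prod_sq1, use assms in \<open>auto simp: eps_sq\<close>)
qed

lemma epsP_sd_right:
  assumes "finite S" "finite T" "finite T'"
  shows "epsP S T * epsP S T' = (epsP S (sd T T') :: 'a::comm_ring_1)"
proof -
  have fs: "finite (sd T T')" using assms unfolding sd_def by auto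
  show ?thesis
    unfolding epsP_right[OF assms(1,2)] epsP_right[OF assms(1,3)] epsP_right[OF assms(1) fs]
    by (rule prod_sd_mult[OF _ assms(2,3)]) (rule prod_prod_sq1, use assms in \<open>auto simp: eps_sq\<close>)
qed

lemma sqP_cocycle:
  fixes sq :: "nat \<Rightarrow> 'a::comm_ring_1"
  assumes "finite S" "finite T" "finite R"
  shows "(\<Prod>j\<in>S \<inter> T. sq j) * (\<Prod>j\<in>sd S T \<inter> R. sq j) = (\<Prod>j\<in>T \<inter> R. sq j) * (\<Prod>j\<in>S \<inter> sd T R. sq j)"
proof -
  have "(\<Prod>j\<in>S \<inter> T. sq j) * (\<Prod>j\<in>sd S T \<inter> R. sq j) = (\<Prod>j\<in>(S \<inter> T) \<union> (sd S T \<inter> R). sq j)"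
    by (rule prod.union_disjoint[symmetric]) (use assms in \<open>auto simp: sd_def\<close>)
  also have "(S \<inter> T) \<union> (sd S T \<inter> R) = (T \<inter> R) \<union> (S \<inter> sd T R)" by (auto simp: sd_def)
  also have "(\<Prod>j\<in>(T \<inter> R) \<union> (S \<inter> sd T R). sq j) = (\<Prod>j\<in>T \<inter> R. sq j) * (\<Prod>j\<in>S \<inter> sd T R. sq j)"
    by (rule prod.union_disjoint) (use assms in \<open>auto simp: sd_def\<close>)
  finally show ?thesis .
qed

lemma mp_cocycle:
  fixes sq :: "nat \<Rightarrow> 'a::comm_ring_1"
  assumes "finite S" "finite T" "finite R"
  shows "monprod sq biquat_eps S T * monprod sq biquat_eps (sd S T) R =
         monprod sq biquat_eps T R * monprod sq biquat_eps S (sd T R)"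
proof -
  have fST: "finite (sd S T)" "finite (sd T R)" using assms by (auto simp: sd_def)
  have e1: "epsP (sd S T) R = epsP S R * (epsP T R :: 'a)" using epsP_sd_left[OF assms(1,2,3)] by metis
  have e2: "epsP S (sd T R) = epsP S T * (epsP S R :: 'a)" using epsP_sd_right[OF assms(1,2,3)] by metis
  have m: "monprod sq biquat_eps A B = epsP A B * (\<Prod>j\<in>A \<inter> B. sq j)" for A B
    by (simp add: monprod_def epsP_def)
  show ?thesis
    unfolding m e1 e2
    using sqP_cocycle[OF assms, of sq] by (simp add: algebra_simps)
qed

lemma sd_sd: "sd S (sd S T) = T" by (auto simp: sd_def)
lemma sd_assoc1: "sd (sd S T) U = sd T (sd S U)" by (auto simp: sd_def)

lemma sum_reindex_sd:
  assumes "S \<subseteq> {..<n}"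
  shows "(\<Sum>X\<in>Pow {..<n}. f X) = (\<Sum>T\<in>Pow {..<n}. f (sd S T))"
  apply (rule sum.reindex_bij_witness[where i="sd S" and j="sd S"])
  apply (simp_all only: sd_sd)
  using assms by (auto simp: sd_def)

lemma gm_assoc:
  fixes a b c :: "nat set \<Rightarrow> 'a::comm_ring_1"
  shows "gen_mult n sq biquat_eps (gen_mult n sq biquat_eps a b) c U =
         gen_mult n sq biquat_eps a (gen_mult n sq biquat_eps b c) U"
proof (cases "U \<subseteq> {..<n}")
  case True
  let ?P = "Pow {..<n}"
  let ?m = "monprod sq biquat_eps"
  have L: "gen_mult n sq biquat_eps (gen_mult n sq biquat_eps a b) c U =
    (\<Sum>S\<in>?P. \<Sum>T\<in>?P. a S * b T * c (sd (sd S T) U) * (?m S T * ?m (sd S T) (sd (sd S T) U)))"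
  proof -
    have "gen_mult n sq biquat_eps (gen_mult n sq biquat_eps a b) c U =
      (\<Sum>X\<in>?P. (\<Sum>S\<in>?P. a S * b (sd S X) * ?m S (sd S X)) * c (sd X U) * ?m X (sd X U))"
      unfolding gm_eq[OF True] by (rule sum.cong[OF refl]) (simp add: gm_eq)
    also have "\<dots> = (\<Sum>X\<in>?P. \<Sum>S\<in>?P. a S * b (sd S X) * c (sd X U) * (?m S (sd S X) * ?m X (sd X U)))"
      by (simp add: sum_distrib_right mult.assoc mult.left_commute)
    also have "\<dots> = (\<Sum>S\<in>?P. \<Sum>X\<in>?P. a S * b (sd S X) * c (sd X U) * (?m S (sd S X) * ?m X (sd X U)))"
      by (rule sum.swap)
    also have "\<dots> = (\<Sum>S\<in>?P. \<Sum>T\<in>?P. a S * b T * c (sd (sd S T) U) * (?m S T * ?m (sd S T) (sd (sd S T) U)))"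
    proof (rule sum.cong[OF refl])
      fix S assume "S \<in> ?P"
      then show "(\<Sum>X\<in>?P. a S * b (sd S X) * c (sd X U) * (?m S (sd S X) * ?m X (sd X U))) =
            (\<Sum>T\<in>?P. a S * b T * c (sd (sd S T) U) * (?m S T * ?m (sd S T) (sd (sd S T) U)))"
        by (subst sum_reindex_sd[of S n]) (auto simp: sd_sd)
    qed
    finally show ?thesis .
  qed
  have R: "gen_mult n sq biquat_eps a (gen_mult n sq biquat_eps b c) U =
    (\<Sum>S\<in>?P. \<Sum>T\<in>?P. a S * b T * c (sd T (sd S U)) * (?m T (sd T (sd S U)) * ?m S (sd S U)))"
  proof -
    have "gen_mult n sq biquat_eps a (gen_mult n sq biquat_eps b c) U =
      (\<Sum>S\<in>?P. a S * (\<Sum>T\<in>?P. b T * c (sd T (sd S U)) * ?m T (sd T (sd S U))) * ?m S (sd S U))"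
      unfolding gm_eq[OF True] by (rule sum.cong[OF refl]) (simp add: gm_eq sd_sub True)
    also have "\<dots> = (\<Sum>S\<in>?P. \<Sum>T\<in>?P. a S * b T * c (sd T (sd S U)) * (?m T (sd T (sd S U)) * ?m S (sd S U)))"
      by (simp add: sum_distrib_right sum_distrib_left algebra_simps)
    finally show ?thesis .
  qed
  show ?thesis unfolding L R
  proof (intro sum.cong[OF refl])
    fix S T assume S: "S \<in> ?P" and T: "T \<in> ?P"
    have f: "finite S" "finite T" "finite (sd T (sd S U))" using S T True by (auto simp: sd_def intro: finite_subset)
    have e: "sd (sd S T) U = sd T (sd S U)" "sd T (sd T (sd S U)) = sd S U" by (auto simp: sd_def)
    show "a S * b T * c (sd (sd S T) U) * (?m S T * ?m (sd S T) (sd (sd S T) U)) =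
          a S * b T * c (sd T (sd S U)) * (?m T (sd T (sd S U)) * ?m S (sd S U))"
      unfolding e(1) using mp_cocycle[OF f, of sq] e(2) by simp
  qed
next
  case False
  then show ?thesis by (simp add: gm_out)
qed

definition scl :: "'a::field \<Rightarrow> (nat set \<Rightarrow> 'a) \<Rightarrow> nat set \<Rightarrow> 'a" where
  "scl c u = (\<lambda>S. c * u S)"

definition ebas :: "nat set \<Rightarrow> nat set \<Rightarrow> 'a::zero_neq_one" where
  "ebas S = (\<lambda>T. if T = S then 1 else 0)"

lemma fsum_apply: "(sum f A) T = (\<Sum>x\<in>A. f x T)"
  by (induct A rule: infinite_finite_induct) (auto simp: plus_fun_def zero_fun_def)

lemma vs_scl: "vector_space (scl :: 'a::field \<Rightarrow> _)"
  by unfold_locales (auto simp: scl_def fun_eq_iff algebra_simps)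

lemma supp_sum_ebas:
  fixes v :: "nat set \<Rightarrow> 'a::field"
  assumes "supp_in v {..<n}"
  shows "v = (\<Sum>S\<in>Pow {..<n}. scl (v S) (ebas S))"
proof (rule ext)
  fix T
  have "(\<Sum>S\<in>Pow {..<n}. scl (v S) (ebas S)) T = (\<Sum>S\<in>Pow {..<n}. v S * (if T = S then 1 else 0))"
    by (simp add: scl_def ebas_def fsum_apply)
  also have "\<dots> = (if T \<in> Pow {..<n} then v T else 0)"
    by (simp add: if_distrib sum.delta cong: if_cong)
  also have "\<dots> = v T" using assms by (auto simp: supp_in_def)
  finally show "v T = (\<Sum>S\<in>Pow {..<n}. scl (v S) (ebas S)) T" by simp
qed

lemma right_inv_exists:
  fixes sq :: "nat \<Rightarrow> 'a::field"
  assumes Z: "ZD n sq {..<n}" and sw: "supp_in w {..<n}" and wn: "w \<noteq> (\<lambda>_. 0)"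
  shows "\<exists>z. supp_in z {..<n} \<and> gen_mult n sq biquat_eps w z = gen_one"
proof -
  interpret V: vector_space "scl :: 'a \<Rightarrow> _" by (rule vs_scl)
  let ?f = "gen_mult n sq biquat_eps w"
  let ?P = "Pow {..<n}"
  let ?E = "ebas ` ?P :: (nat set \<Rightarrow> 'a) set"
  let ?W = "{v :: nat set \<Rightarrow> 'a. supp_in v {..<n}}"
  interpret L: Vector_Spaces.linear "scl :: 'a \<Rightarrow> _" scl ?f
  proof (unfold_locales)
    fix b1 b2 :: "nat set \<Rightarrow> 'a"
    show "?f (b1 + b2) = ?f b1 + ?f b2"
      using gm_add_right[of n sq biquat_eps w b1 b2] by (auto simp: fun_eq_iff plus_fun_def)
  next
    fix r :: 'a and b :: "nat set \<Rightarrow> 'a"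
    show "?f (scl r b) = scl r (?f b)"
      using gm_scal_right[of n sq biquat_eps w r b] by (auto simp: fun_eq_iff scl_def)
  qed
  have injE: "inj_on ebas ?P" by (auto simp: inj_on_def ebas_def fun_eq_iff)
  have finE: "finite ?E" by simp
  have indE: "V.independent ?E"
  proof -
    have "\<not> V.dependent ?E"
    proof
      assume "V.dependent ?E"
      then obtain c where c: "\<exists>v\<in>?E. c v \<noteq> 0" and s: "(\<Sum>v\<in>?E. scl (c v) v) = 0"
        using V.dependent_finite[OF finE] by blast
      obtain S where S: "S \<in> ?P" "c (ebas S) \<noteq> 0" using c by blast
      have "(\<Sum>v\<in>?E. scl (c v) v) = (\<Sum>T\<in>?P. scl (c (ebas T)) (ebas T))"
        by (rule sum.reindex[OF injE, unfolded comp_def])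
      then have "(\<Sum>T\<in>?P. scl (c (ebas T)) (ebas T)) S = 0" using s by simp
      moreover have "(\<Sum>T\<in>?P. scl (c (ebas T)) (ebas T)) S = c (ebas S)"
        using S(1) by (simp add: fsum_apply scl_def ebas_def if_distrib sum.delta cong: if_cong)
      ultimately show False using S(2) by simp
    qed
    then show ?thesis by simp
  qed
  have subW: "V.subspace ?W"
    by (rule V.subspaceI) (auto simp: supp_in_def scl_def plus_fun_def)
  have spanE: "V.span ?E = ?W"
  proof
    show "V.span ?E \<subseteq> ?W"
      by (rule V.span_minimal[OF _ subW]) (auto simp: supp_in_def ebas_def split: if_splits)
    show "?W \<subseteq> V.span ?E"
    proof
      fix v assume "v \<in> ?W"
      then have "v = (\<Sum>S\<in>?P. scl (v S) (ebas S))" by (simp add: supp_sum_ebas)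
      also have "\<dots> \<in> V.span ?E"
        by (intro V.span_sum V.span_scale V.span_base) auto
      finally show "v \<in> V.span ?E" .
    qed
  qed
  have inj: "inj_on ?f (V.span ?E)"
  proof (subst L.inj_on_iff_eq_0[OF V.subspace_span], intro ballI impI)
    fix x assume x: "x \<in> V.span ?E" and fx: "?f x = 0"
    have "supp_in x {..<n}" using x spanE by auto
    moreover have "?f x = (\<lambda>_. 0)" using fx by (simp add: zero_fun_def)
    ultimately have "x = (\<lambda>_. 0)" using Z sw wn unfolding ZD_def by blast
    then show "x = 0" by (simp add: zero_fun_def)
  qed
  have indF: "V.independent (?f ` ?E)" by (rule L.independent_injective_image[OF indE inj])
  have cardF: "card (?f ` ?E) = card ?E"
    by (rule card_image, rule inj_on_subset[OF inj V.span_superset])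
  have FW: "?f ` ?E \<subseteq> ?W"
    unfolding supp_in_def using gm_out by blast
  have "?W \<subseteq> V.span (?f ` ?E)"
  proof
    fix x assume xW: "x \<in> ?W"
    show "x \<in> V.span (?f ` ?E)"
    proof (rule ccontr)
      assume nx: "x \<notin> V.span (?f ` ?E)"
      have xF: "x \<notin> ?f ` ?E" using nx V.span_base by metis
      have i1: "V.independent (insert x (?f ` ?E))" using V.independent_insertI[OF nx indF] .
      have i2: "insert x (?f ` ?E) \<subseteq> V.span ?E" unfolding spanE using xW FW by (rule insert_subsetI)
      have c0: "finite (insert x (?f ` ?E)) \<and> card (insert x (?f ` ?E)) \<le> card ?E" by (rule V.independent_span_bound[OF finE i1 i2])
      have c1: "card (insert x (?f ` ?E)) \<le> card ?E" using c0 by (rule conjunct2)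
      have fF: "finite (?f ` ?E)" using finE by (rule finite_imageI)
      have c2: "card (insert x (?f ` ?E)) = Suc (card (?f ` ?E))" using fF xF by (rule card_insert_disjoint)
      have c3: "card (insert x (?f ` ?E)) = Suc (card ?E)" using c2 cardF by simp
      show False using c1 c3 by simp
    qed
  qed
  moreover have "gen_one \<in> ?W" by (auto simp: supp_in_def gen_one_def)
  ultimately have "gen_one \<in> V.span (?f ` ?E)" by (rule subsetD)
  then have "gen_one \<in> ?f ` V.span ?E" by (simp only: L.span_image)
  then obtain z where z: "z \<in> V.span ?E" "?f z = gen_one" by (rule imageE) simp
  have "supp_in z {..<n}" using z(1) unfolding spanE by simp
  then show ?thesis using z(2) by blast
qed

lemma mp_empty: "monprod sq eps {} T = 1" "monprod sq eps S {} = 1"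
  by (simp_all add: monprod_def)

lemma gm_one_right:
  fixes u :: "nat set \<Rightarrow> 'a::comm_ring_1"
  assumes "supp_in u {..<n}"
  shows "gen_mult n sq eps u gen_one U = u U"
proof (cases "U \<subseteq> {..<n}")
  case True
  have "gen_mult n sq eps u gen_one U = (\<Sum>S\<in>Pow {..<n}. if S = U then u S else 0)"
    unfolding gm_eq[OF True]
    by (rule sum.cong[OF refl]) (auto simp: gen_one_def sd_def mp_empty)
  also have "\<dots> = u U" using True by (simp add: sum.delta)
  finally show ?thesis .
next
  case False then show ?thesis using assms by (simp add: gm_out supp_in_def)
qed

lemma gm_one_left:
  fixes u :: "nat set \<Rightarrow> 'a::comm_ring_1"
  assumes "supp_in u {..<n}"
  shows "gen_mult n sq eps gen_one u U = u U"
proof (cases "U \<subseteq> {..<n}")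
  case True
  have "gen_mult n sq eps gen_one u U = (\<Sum>S\<in>Pow {..<n}. if S = {} then u U else 0)"
    unfolding gm_eq[OF True]
    by (rule sum.cong[OF refl]) (auto simp: gen_one_def sd_def mp_empty)
  also have "\<dots> = u U" by (simp add: sum.delta)
  finally show ?thesis .
next
  case False then show ?thesis using assms by (simp add: gm_out supp_in_def)
qed

lemma two_sided_inv:
  fixes sq :: "nat \<Rightarrow> 'a::field"
  assumes Z: "ZD n sq {..<n}" and sw: "supp_in w {..<n}" and wn: "w \<noteq> (\<lambda>_. 0)"
  shows "\<exists>z. supp_in z {..<n} \<and> gen_mult n sq biquat_eps w z = gen_one \<and> gen_mult n sq biquat_eps z w = gen_one"
proof -
  let ?g = "gen_mult n sq biquat_eps"
  obtain z where sz: "supp_in z {..<n}" and wz: "?g w z = gen_one"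
    using right_inv_exists[OF Z sw wn] by blast
  have zn: "z \<noteq> (\<lambda>_. 0)"
  proof
    assume "z = (\<lambda>_. 0)"
    then have "?g w z {} = 0" by (simp add: gm_zero_right)
    then show False using wz by (simp add: gen_one_def)
  qed
  obtain y where sy: "supp_in y {..<n}" and zy: "?g z y = gen_one"
    using right_inv_exists[OF Z sz zn] by blast
  have "w = y"
  proof
    fix U
    have "w U = ?g w gen_one U" using gm_one_right[OF sw] by simp
    also have "\<dots> = ?g w (?g z y) U" using zy by simp
    also have "\<dots> = ?g (?g w z) y U" by (simp add: gm_assoc)
    also have "\<dots> = y U" using wz gm_one_left[OF sy] by simp
    finally show "w U = y U" .
  qed
  then show ?thesis using sz wz zy by blast
qed

lemma hom_Fract1: "is_hom (\<lambda>r::'a::idom. Fract r 1)"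
  unfolding is_hom_def by (simp add: One_fract_def)

lemma hom_comp: "is_hom f \<Longrightarrow> is_hom g \<Longrightarrow> is_hom (g \<circ> f)"
  unfolding is_hom_def by simp

definition iota :: "R4 poly \<Rightarrow> kx" where
  "iota p = Fract (map_poly (\<lambda>r. Fract r 1) p) 1"

lemma hom_iota: "is_hom iota"
proof -
  have e: "iota = (\<lambda>q. Fract q 1) \<circ> map_poly (\<lambda>r. Fract r 1)" by (auto simp: iota_def fun_eq_iff)
  show ?thesis unfolding e by (rule hom_comp[OF hom_map_poly[OF hom_Fract1] hom_Fract1])
qed

lemma Fract1_eq0: "(Fract (a::'a::idom) 1 = 0) \<longleftrightarrow> a = 0"
  by (simp add: Zero_fract_def eq_fract)

lemma map_Fract_eq0: "map_poly (\<lambda>r. Fract (r::'a::idom) 1) p = 0 \<longleftrightarrow> p = 0"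
  by (rule map_poly_eq_0_iff) (simp_all add: Fract1_eq0 Zero_fract_def[symmetric])

lemma iota_eq0: "iota p = 0 \<longleftrightarrow> p = 0"
  unfolding iota_def Fract1_eq0 map_Fract_eq0 ..

lemma map_Fract_smult:
  "map_poly (\<lambda>r. Fract (r::'a::idom) 1) (smult c P) = smult (Fract c 1) (map_poly (\<lambda>r. Fract r 1) P)"
  by (rule poly_eqI) (simp add: coeff_map_poly Zero_fract_def[symmetric])

lemma poly_clear:
  fixes p :: "'a::idom fract poly"
  shows "\<exists>e P. e \<noteq> 0 \<and> smult (Fract e 1) p = map_poly (\<lambda>r. Fract r 1) P"
proof (induct p)
  case 0
  show ?case by (rule exI[of _ 1], rule exI[of _ 0]) simp
next
  case (pCons a p)
  then obtain e' P' where e': "e' \<noteq> 0" and P': "smult (Fract e' 1) p = map_poly (\<lambda>r. Fract r 1) P'" by blast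
  obtain x y where a: "a = Fract x y" and y: "y \<noteq> 0" by (cases a) blast
  have c: "Fract (y * e') 1 * a = Fract (e' * x) 1" unfolding a using y by (simp add: eq_fract algebra_simps)
  have s: "smult (Fract (y * e') 1) p = map_poly (\<lambda>r. Fract r 1) (smult y P')"
  proof -
    have "smult (Fract (y * e') 1) p = smult (Fract y 1) (smult (Fract e' 1) p)" by simp
    then show ?thesis unfolding P' map_Fract_smult by simp
  qed
  have "smult (Fract (y * e') 1) (pCons a p) = map_poly (\<lambda>r. Fract r 1) (pCons (e' * x) (smult y P'))"
    by (subst map_poly_pCons) (simp_all add: c s Zero_fract_def[symmetric])
  moreover have "y * e' \<noteq> 0" using y e' by simp
  ultimately show ?case by blast
qed

lemma kx_clear: "\<exists>d r. d \<noteq> 0 \<and> iota d * (a::kx) = iota r"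
proof -
  obtain p q where a: "a = Fract p q" and q: "q \<noteq> 0" by (cases a) blast
  obtain e1 P1 where e1: "e1 \<noteq> 0" and P1: "smult (Fract e1 1) p = map_poly (\<lambda>r. Fract r 1) P1"
    using poly_clear by blast
  obtain e2 Q1 where e2: "e2 \<noteq> 0" and Q1: "smult (Fract e2 1) q = map_poly (\<lambda>r. Fract r 1) Q1"
    using poly_clear by blast
  define P where "P = smult e2 P1"
  define Q where "Q = smult e1 Q1"
  have mP: "map_poly (\<lambda>r. Fract r 1) P = smult (Fract (e1 * e2) 1) p"
    unfolding P_def map_Fract_smult P1[symmetric] by (simp add: mult.commute)
  have mQ: "map_poly (\<lambda>r. Fract r 1) Q = smult (Fract (e1 * e2) 1) q"
    unfolding Q_def map_Fract_smult Q1[symmetric] by simp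
  have E: "Fract (e1 * e2) 1 \<noteq> 0" using e1 e2 by (simp add: Fract1_eq0)
  have Qn: "Q \<noteq> 0"
  proof
    assume "Q = 0"
    then have "smult (Fract (e1 * e2) 1) q = 0" using mQ by simp
    then show False using E q by simp
  qed
  have "iota Q * a = iota P"
    unfolding iota_def a mP mQ using q by (simp add: eq_fract algebra_simps)
  then show ?thesis using Qn by blast
qed

lemma family_clear:
  fixes u :: "nat set \<Rightarrow> kx"
  assumes "finite A"
  shows "\<exists>D u'. D \<noteq> 0 \<and> (\<forall>S\<in>A. iota D * u S = iota (u' S))"
  using assms
proof (induct A rule: finite_induct)
  case empty
  show ?case by (rule exI[of _ 1]) simp
next
  case (insert S A)
  then obtain D u' where D: "D \<noteq> 0" and u': "\<forall>T\<in>A. iota D * u T = iota (u' T)" by blast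
  obtain d r where d: "d \<noteq> 0" and r: "iota d * u S = iota r" using kx_clear by blast
  define u'' where "u'' = (\<lambda>T. if T = S then D * r else d * u' T)"
  have "\<forall>T\<in>insert S A. iota (D * d) * u T = iota (u'' T)"
  proof
    fix T assume T: "T \<in> insert S A"
    show "iota (D * d) * u T = iota (u'' T)"
    proof (cases "T = S")
      case True
      then show ?thesis unfolding u''_def
        using r by (simp add: hom_mult[OF hom_iota] algebra_simps)
    next
      case False
      then have "T \<in> A" using T by simp
      then show ?thesis unfolding u''_def
        using u' False by (simp add: hom_mult[OF hom_iota] algebra_simps)
    qed
  qed
  moreover have "D * d \<noteq> 0" using D d by simp
  ultimately show ?case by blast
qed

definition sqK :: "nat \<Rightarrow> kx" where
  "sqK i = (if i = 0 then xvar else if i = 1 then const_kx t3 else if i = 2 then xvar - const_kx t1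
     else if i = 3 then const_kx t4 else cubic)"

lemma mapF_pCons: "map_poly (\<lambda>r. Fract r 1) (pCons a p) = pCons (Fract (a::'a::idom) 1) (map_poly (\<lambda>r. Fract r 1) p)"
  by (rule map_poly_pCons) (simp add: Zero_fract_def[symmetric])
lemma iota_X: "iota [:0, 1:] = xvar"
  by (simp add: iota_def xvar_def mapF_pCons Zero_fract_def[symmetric] One_fract_def[symmetric])
lemma iota_C: "iota [:c:] = const_kx (Fract c 1)"
  by (simp add: iota_def const_kx_def mapF_pCons)
lemma iota_lin: "iota [:- c, 1:] = xvar - const_kx (Fract c 1)"
proof -
  have "[:- c, 1:] = [:0, 1:] - [:c:]" by simp
  then show ?thesis using hom_add[OF hom_iota, of "[:0,1:]" "-[:c:]"] hom_neg[OF hom_iota, of "[:c:]"]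
    by (simp add: iota_X iota_C)
qed

lemma tvals: "Fract T1r 1 = t1" "Fract T2r 1 = t2" "Fract T3r 1 = t3" "Fract T4r 1 = t4"
  by (simp_all add: t1_def t2_def t3_def t4_def T1r_def T2r_def T3r_def T4r_def)

lemma iota_sq: "iota \<circ> sq4 = sqK"
proof
  fix i :: nat
  consider "i = 0" | "i = 1" | "i = 2" | "i = 3" | "i \<noteq> 0 \<and> i \<noteq> 1 \<and> i \<noteq> 2 \<and> i \<noteq> 3" by blast
  then show "(iota \<circ> sq4) i = sqK i"
  proof cases
    case 1 then show ?thesis by (simp add: sq4_def sqK_def iota_X)
  next
    case 2 then show ?thesis by (simp add: sq4_def sqK_def iota_C tvals)
  next
    case 3 then show ?thesis by (simp add: sq4_def sqK_def iota_lin tvals)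
  next
    case 4 then show ?thesis by (simp add: sq4_def sqK_def iota_C tvals)
  next
    case 5
    then have "sq4 i = [:0, 1:] * [:- T1r, 1:] * [:- T2r, 1:]" "sqK i = cubic" by (simp_all add: sq4_def sqK_def)
    then show ?thesis by (simp only: comp_apply hom_mult[OF hom_iota] iota_X iota_lin tvals cubic_def)
  qed
qed

lemma ZD_kx: "ZD 5 sqK {..<5}"
  unfolding ZD_def
proof (intro allI impI)
  fix u v :: "nat set \<Rightarrow> kx"
  assume su: "supp_in u {..<5}" and sv: "supp_in v {..<5}" and uv: "gen_mult 5 sqK biquat_eps u v = (\<lambda>_. 0)"
  let ?A = "Pow {..<5::nat}"
  obtain D u' where D: "D \<noteq> 0" and u': "\<forall>S\<in>?A. iota D * u S = iota (u' S)"
    using family_clear[of ?A u] by auto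
  obtain E v' where E: "E \<noteq> 0" and v': "\<forall>S\<in>?A. iota E * v S = iota (v' S)"
    using family_clear[of ?A v] by auto
  define u2 where "u2 = (\<lambda>S. if S \<in> ?A then u' S else 0)"
  define v2 where "v2 = (\<lambda>S. if S \<in> ?A then v' S else 0)"
  have iu: "iota \<circ> u2 = (\<lambda>S. iota D * u S)"
  proof
    fix S show "(iota \<circ> u2) S = iota D * u S"
      using u' su hom_0[OF hom_iota] by (auto simp: u2_def supp_in_def)
  qed
  have iv: "iota \<circ> v2 = (\<lambda>S. iota E * v S)"
  proof
    fix S show "(iota \<circ> v2) S = iota E * v S"
      using v' sv hom_0[OF hom_iota] by (auto simp: v2_def supp_in_def)
  qed
  have s2: "supp_in u2 {0,1,2,3,4}" "supp_in v2 {0,1,2,3,4}"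
    unfolding u2_def v2_def supp_in_def by (auto simp: lessThan_def)
  have "gen_mult 5 sq4 biquat_eps u2 v2 = (\<lambda>_. 0)"
  proof
    fix U
    have "iota (gen_mult 5 sq4 biquat_eps u2 v2 U) = gen_mult 5 sqK biquat_eps (\<lambda>S. iota D * u S) (\<lambda>S. iota E * v S) U"
      using hom_gm[OF hom_iota, of 5 sq4 u2 v2 U] unfolding iota_sq iu iv .
    also have "\<dots> = iota D * (iota E * gen_mult 5 sqK biquat_eps u v U)"
      by (simp add: gm_scal_left gm_scal_right)
    also have "\<dots> = 0" using uv by simp
    finally show "gen_mult 5 sq4 biquat_eps u2 v2 U = 0" using iota_eq0 by blast
  qed
  then have "u2 = (\<lambda>_. 0) \<or> v2 = (\<lambda>_. 0)" using Z0 s2 unfolding ZD_def by blast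
  moreover have "iota D \<noteq> 0" "iota E \<noteq> 0" using D E iota_eq0 by auto
  ultimately show "u = (\<lambda>_. 0) \<or> v = (\<lambda>_. 0)"
    using iu iv by (metis (mono_tags) comp_apply hom_0[OF hom_iota] mult_eq_0_iff)
qed

lemma poly_mod_sum: "(sum f A) mod (z::'a::field poly) = (\<Sum>x\<in>A. f x mod z)"
  by (induct A rule: infinite_finite_induct) (simp_all add: poly_mod_add_left)

lemma kmod_deg: "degree kmod = 2" "kmod \<noteq> 0"
  by (simp_all add: kmod_def)

lemma deg2_expand: "degree p < 2 \<Longrightarrow> p = [:coeff p 0, coeff p 1:]"
  by (rule poly_eqI) (auto simp: coeff_pCons coeff_eq_0 split: nat.splits)

lemma mulmod:
  assumes "degree p < 2" "degree q < 2"
  shows "(p * q * [:c:]) mod kmod = [:c * (coeff p 0 * coeff q 0 + cubic * coeff p 1 * coeff q 1),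
                                      c * (coeff p 0 * coeff q 1 + coeff p 1 * coeff q 0):]"
proof -
  define a0 where "a0 = coeff p 0"
  define a1 where "a1 = coeff p 1"
  define b0 where "b0 = coeff q 0"
  define b1 where "b1 = coeff q 1"
  have p: "p = [:a0, a1:]" and q: "q = [:b0, b1:]" using deg2_expand assms a0_def a1_def b0_def b1_def by auto
  let ?R = "[:c * (a0 * b0 + cubic * a1 * b1), c * (a0 * b1 + a1 * b0):]"
  have e: "p * q * [:c:] = ?R + [:c * a1 * b1:] * kmod"
    unfolding p q kmod_def by (simp add: algebra_simps)
  have "degree ?R < degree kmod" by (simp add: kmod_deg)
  then have r: "?R mod kmod = ?R" by (rule mod_poly_less)
  have "(p * q * [:c:]) mod kmod = ?R" unfolding e mod_mult_self1 r ..
  then show ?thesis unfolding a0_def a1_def b0_def b1_def .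
qed

definition Phi :: "(nat set \<Rightarrow> kx poly) \<Rightarrow> nat set \<Rightarrow> kx" where
  "Phi u S = (if 4 \<in> S then coeff (u (S - {4})) 1 else coeff (u S) 0)"
definition Psi :: "(nat set \<Rightarrow> kx) \<Rightarrow> nat set \<Rightarrow> kx poly" where
  "Psi z S = (if S \<subseteq> {..<4} then [:z S, z (insert 4 S):] else 0)"

abbreviation "sqP \<equiv> biquat_sq [:xvar:] [:const_kx t3:] [:xvar - const_kx t1:] [:const_kx t4:]"

lemma hom_const: "is_hom (\<lambda>c::'a::comm_ring_1. [:c:])"
  unfolding is_hom_def by (simp add: one_pCons)

lemma mp_cong: "(\<And>i. i \<in> S \<inter> T \<Longrightarrow> sq i = sq' i) \<Longrightarrow> monprod sq eps S T = monprod sq' eps S T"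
  unfolding monprod_def by (metis (no_types, lifting) prod.cong)

lemma sqP_val: "i < 4 \<Longrightarrow> sqP i = [:sqK i:]"
proof -
  assume "i < 4"
  then consider "i = 0" | "i = 1" | "i = 2" | "i = 3" by linarith
  then show ?thesis by cases (simp_all add: biquat_sq_def sqK_def)
qed

lemma sqP_mp:
  assumes "S \<subseteq> {..<4}"
  shows "monprod sqP biquat_eps S T = [:monprod sqK biquat_eps S T:]"
proof -
  have "[:monprod sqK biquat_eps S T:] = monprod ((\<lambda>c. [:c:]) \<circ> sqK) biquat_eps S T"
    by (rule hom_mp[OF hom_const])
  also have "\<dots> = monprod sqP biquat_eps S T"
    by (rule mp_cong) (use assms in \<open>auto simp: sqP_val\<close>)
  finally show ?thesis by simp
qed

lemma A_mult_eq:
  assumes U: "U \<subseteq> {..<4}"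
  shows "A_mult u v U = (\<Sum>S\<in>Pow {..<4}. u S * v (sd S U) * [:monprod sqK biquat_eps S (sd S U):]) mod kmod"
  unfolding A_mult_def biquat_mult_def gm_eq[OF U]
  by (rule arg_cong[where f="\<lambda>x. x mod kmod"], rule sum.cong[OF refl]) (simp add: sqP_mp)

lemma A_mult_out:
  assumes U: "\<not> U \<subseteq> {..<4}"
  shows "A_mult u v U = 0"
  unfolding A_mult_def biquat_mult_def by (simp add: gm_out[OF U])

lemma A_mult_coeffs:
  assumes U: "U \<subseteq> {..<4}" and u: "u \<in> A_carrier" and v: "v \<in> A_carrier"
  shows "coeff (A_mult u v U) 0 = (\<Sum>S\<in>Pow {..<4}. monprod sqK biquat_eps S (sd S U) *
            (coeff (u S) 0 * coeff (v (sd S U)) 0 + cubic * coeff (u S) 1 * coeff (v (sd S U)) 1))"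
    and "coeff (A_mult u v U) 1 = (\<Sum>S\<in>Pow {..<4}. monprod sqK biquat_eps S (sd S U) *
            (coeff (u S) 0 * coeff (v (sd S U)) 1 + coeff (u S) 1 * coeff (v (sd S U)) 0))"
proof -
  have du: "\<And>S. degree (u S) < 2" and dv: "\<And>S. degree (v S) < 2"
    using u v by (auto simp: A_carrier_def K_elem_def)
  have e: "A_mult u v U = (\<Sum>S\<in>Pow {..<4}. [:monprod sqK biquat_eps S (sd S U) *
            (coeff (u S) 0 * coeff (v (sd S U)) 0 + cubic * coeff (u S) 1 * coeff (v (sd S U)) 1),
          monprod sqK biquat_eps S (sd S U) *
            (coeff (u S) 0 * coeff (v (sd S U)) 1 + coeff (u S) 1 * coeff (v (sd S U)) 0):])"
    unfolding A_mult_eq[OF U] poly_mod_sum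
    by (rule sum.cong[OF refl]) (rule mulmod[OF du dv])
  show "coeff (A_mult u v U) 0 = (\<Sum>S\<in>Pow {..<4}. monprod sqK biquat_eps S (sd S U) *
            (coeff (u S) 0 * coeff (v (sd S U)) 0 + cubic * coeff (u S) 1 * coeff (v (sd S U)) 1))"
    unfolding e coeff_sum by simp
  show "coeff (A_mult u v U) 1 = (\<Sum>S\<in>Pow {..<4}. monprod sqK biquat_eps S (sd S U) *
            (coeff (u S) 0 * coeff (v (sd S U)) 1 + coeff (u S) 1 * coeff (v (sd S U)) 0))"
    unfolding e coeff_sum by simp
qed

lemma pow4: "{S\<in>Pow {..<5::nat}. 4 \<notin> S} = Pow {..<4}"
  by (auto simp: subset_iff less_Suc_eq numeral_eq_Suc)

lemma four_five: "(4::nat) < 5" by simp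

lemma eps4: "biquat_eps 4 j = 1" "biquat_eps i 4 = 1"
  by (simp_all add: biquat_eps_def)

lemma gm5_even:
  assumes U: "U \<subseteq> {..<4}"
  shows "gen_mult 5 sqK biquat_eps (Phi u) (Phi v) U = (\<Sum>S\<in>Pow {..<4}. monprod sqK biquat_eps S (sd S U) *
            (coeff (u S) 0 * coeff (v (sd S U)) 0 + cubic * coeff (u S) 1 * coeff (v (sd S U)) 1))"
proof -
  have U5: "U \<subseteq> {..<5}" using U by auto
  show ?thesis
    unfolding gm_eq[OF U5] sum_split_m[OF four_five] pow4
  proof (rule sum.cong[OF refl])
    fix S :: "nat set" assume S: "S \<in> Pow {..<4}"
    let ?T = "sd S U"
    have S4: "4 \<notin> S" using S by auto
    have U4: "4 \<notin> U" using U by auto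
    have T4: "4 \<notin> ?T" using S4 U4 by (rule sd_notin)
    have fin: "finite S" "finite ?T" using S U by (auto simp: sd_def intro: finite_subset)
    have a: "Phi u S = coeff (u S) 0" "Phi v ?T = coeff (v ?T) 0" using S4 T4 by (simp_all add: Phi_def)
    have b: "Phi u (insert 4 S) = coeff (u S) 1" "Phi v (insert 4 ?T) = coeff (v ?T) 1"
      using S4 T4 by (simp_all add: Phi_def)
    have c: "sd (insert 4 S) U = insert 4 ?T" using S4 U4 by (rule sd_ins_l)
    have d: "monprod sqK biquat_eps (insert 4 S) (insert 4 ?T) = monprod sqK biquat_eps S ?T * cubic"
      using mp_insLR[OF fin S4 T4, of sqK biquat_eps] by (simp add: eps4 sqK_def)
    show "Phi u S * Phi v ?T * monprod sqK biquat_eps S ?T +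
          Phi u (insert 4 S) * Phi v (sd (insert 4 S) U) * monprod sqK biquat_eps (insert 4 S) (sd (insert 4 S) U) =
          monprod sqK biquat_eps S ?T * (coeff (u S) 0 * coeff (v ?T) 0 + cubic * coeff (u S) 1 * coeff (v ?T) 1)"
      unfolding a b c d b by (simp add: algebra_simps)
  qed
qed

lemma gm5_odd:
  assumes U: "U \<subseteq> {..<4}"
  shows "gen_mult 5 sqK biquat_eps (Phi u) (Phi v) (insert 4 U) = (\<Sum>S\<in>Pow {..<4}. monprod sqK biquat_eps S (sd S U) *
            (coeff (u S) 0 * coeff (v (sd S U)) 1 + coeff (u S) 1 * coeff (v (sd S U)) 0))"
proof -
  have U5: "insert 4 U \<subseteq> {..<5}" using U by auto
  show ?thesis
    unfolding gm_eq[OF U5] sum_split_m[OF four_five] pow4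
  proof (rule sum.cong[OF refl])
    fix S :: "nat set" assume S: "S \<in> Pow {..<4}"
    let ?T = "sd S U"
    have S4: "4 \<notin> S" using S by auto
    have U4: "4 \<notin> U" using U by auto
    have T4: "4 \<notin> ?T" using S4 U4 by (rule sd_notin)
    have fin: "finite S" "finite ?T" using S U by (auto simp: sd_def intro: finite_subset)
    have a: "Phi u S = coeff (u S) 0" "Phi v ?T = coeff (v ?T) 0" using S4 T4 by (simp_all add: Phi_def)
    have b: "Phi u (insert 4 S) = coeff (u S) 1" "Phi v (insert 4 ?T) = coeff (v ?T) 1"
      using S4 T4 by (simp_all add: Phi_def)
    have c: "sd S (insert 4 U) = insert 4 ?T" "sd (insert 4 S) (insert 4 U) = ?T"
      using S4 U4 by (rule sd_ins_r, rule sd_ins_both)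
    have d: "monprod sqK biquat_eps S (insert 4 ?T) = monprod sqK biquat_eps S ?T"
      using mp_insR[OF fin T4, of sqK biquat_eps] S4 by (simp add: eps4)
    have d2: "monprod sqK biquat_eps (insert 4 S) ?T = monprod sqK biquat_eps S ?T"
      using mp_insL[OF fin S4, of sqK biquat_eps] T4 by (simp add: eps4)
    show "Phi u S * Phi v (sd S (insert 4 U)) * monprod sqK biquat_eps S (sd S (insert 4 U)) +
          Phi u (insert 4 S) * Phi v (sd (insert 4 S) (insert 4 U)) * monprod sqK biquat_eps (insert 4 S) (sd (insert 4 S) (insert 4 U)) =
          monprod sqK biquat_eps S ?T * (coeff (u S) 0 * coeff (v ?T) 1 + coeff (u S) 1 * coeff (v ?T) 0)"
      unfolding a b c d d2 by (simp add: algebra_simps)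
  qed
qed

lemma Phi_mult:
  assumes u: "u \<in> A_carrier" and v: "v \<in> A_carrier"
  shows "Phi (A_mult u v) = gen_mult 5 sqK biquat_eps (Phi u) (Phi v)"
proof
  fix U
  show "Phi (A_mult u v) U = gen_mult 5 sqK biquat_eps (Phi u) (Phi v) U"
  proof (cases "U \<subseteq> {..<5}")
    case False
    then have "\<not> U - {4} \<subseteq> {..<4}" "\<not> U \<subseteq> {..<4}" by auto
    then show ?thesis using False by (simp add: gm_out Phi_def A_mult_out)
  next
    case True
    show ?thesis
    proof (cases "4 \<in> U")
      case False
      then have U4: "U \<subseteq> {..<4}" using True by (auto simp: subset_iff less_Suc_eq numeral_eq_Suc)
      show ?thesis using False by (simp add: Phi_def A_mult_coeffs(1)[OF U4 u v] gm5_even[OF U4])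
    next
      case T4: True
      let ?U' = "U - {4}"
      have U4: "?U' \<subseteq> {..<4}" using True by (auto simp: subset_iff less_Suc_eq numeral_eq_Suc)
      have e: "U = insert 4 ?U'" using T4 by auto
      have "Phi (A_mult u v) U = coeff (A_mult u v ?U') 1" using T4 by (simp add: Phi_def)
      also have "\<dots> = gen_mult 5 sqK biquat_eps (Phi u) (Phi v) (insert 4 ?U')"
        by (simp only: A_mult_coeffs(2)[OF U4 u v] gm5_odd[OF U4])
      also have "insert 4 ?U' = U" using T4 by auto
      finally show ?thesis .
    qed
  qed
qed

lemma supp_Phi: "u \<in> A_carrier \<Longrightarrow> supp_in (Phi u) {..<5}"
  unfolding supp_in_def
proof (intro allI impI)
  fix S :: "nat set" assume u: "u \<in> A_carrier" and S: "\<not> S \<subseteq> {..<5}"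
  then obtain x where x: "x \<in> S" "\<not> x < 5" by auto
  then have a: "\<not> S - {4} \<subseteq> {..<4}" "\<not> S \<subseteq> {..<4}" by auto
  then have "u (S - {4}) = 0" "u S = 0" using u by (auto simp: A_carrier_def)
  then show "Phi u S = 0" by (simp add: Phi_def)
qed

lemma Psi_Phi: "u \<in> A_carrier \<Longrightarrow> Psi (Phi u) = u"
proof
  fix S assume u: "u \<in> A_carrier"
  show "Psi (Phi u) S = u S"
  proof (cases "S \<subseteq> {..<4}")
    case True
    then have S4: "4 \<notin> S" by auto
    have "degree (u S) < 2" using u by (simp add: A_carrier_def K_elem_def)
    then have "u S = [:coeff (u S) 0, coeff (u S) 1:]" by (rule deg2_expand)
    then show ?thesis using True S4 by (simp add: Psi_def Phi_def)
  next
    case False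
    then show ?thesis using u by (simp add: Psi_def A_carrier_def)
  qed
qed

lemma Phi_Psi: "supp_in z {..<5} \<Longrightarrow> Phi (Psi z) = z"
proof
  fix S assume z: "supp_in z {..<5}"
  show "Phi (Psi z) S = z S"
  proof (cases "4 \<in> S")
    case True
    show ?thesis
    proof (cases "S - {4} \<subseteq> {..<4}")
      case True
      then show ?thesis using \<open>4 \<in> S\<close> by (simp add: Phi_def Psi_def insert_absorb)
    next
      case False
      then have "\<not> S \<subseteq> {..<5}" by (auto simp: subset_iff less_Suc_eq numeral_eq_Suc)
      then show ?thesis using z False \<open>4 \<in> S\<close> by (simp add: Phi_def Psi_def supp_in_def)
    qed
  next
    case False
    show ?thesis
    proof (cases "S \<subseteq> {..<4}")
      case True
      then show ?thesis using False by (simp add: Phi_def Psi_def)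
    next
      case F2: False
      then have "\<not> S \<subseteq> {..<5}" using False by (auto simp: subset_iff less_Suc_eq numeral_eq_Suc)
      then show ?thesis using z F2 False by (simp add: Phi_def Psi_def supp_in_def)
    qed
  qed
qed

lemma Psi_carrier: "Psi z \<in> A_carrier"
  unfolding A_carrier_def K_elem_def Psi_def by auto

lemma A_mult_carrier: "A_mult u v \<in> A_carrier"
  unfolding A_carrier_def K_elem_def
proof (intro CollectI conjI allI impI)
  fix S :: "nat set"
  have "A_mult u v S = 0 \<or> degree (A_mult u v S) < degree kmod"
    unfolding A_mult_def using degree_mod_less[OF kmod_deg(2)] by blast
  then show "degree (A_mult u v S) < 2" using kmod_deg(1) by auto
next
  fix S :: "nat set" assume "S \<notin> Pow {..<4}"
  then show "A_mult u v S = 0" by (simp add: A_mult_out)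
qed

lemma Psi_one: "Psi gen_one = A_one"
proof
  fix S show "Psi gen_one S = A_one S"
    by (auto simp: Psi_def A_one_def gen_one_def)
qed

lemma Psi_zero: "Psi (\<lambda>_. 0) = A_zero"
  by (auto simp: Psi_def A_zero_def fun_eq_iff)

theorem theorem6p1:
  shows "\<forall>u\<in>A_carrier. u \<noteq> A_zero \<longrightarrow>
           (\<exists>v\<in>A_carrier. A_mult u v = A_one \<and> A_mult v u = A_one)"
proof (intro ballI impI)
  fix u assume u: "u \<in> A_carrier" and un: "u \<noteq> A_zero"
  have pn: "Phi u \<noteq> (\<lambda>_. 0)"
  proof
    assume "Phi u = (\<lambda>_. 0)"
    then have "Psi (Phi u) = A_zero" by (simp add: Psi_zero)
    then show False using Psi_Phi[OF u] un by simp
  qed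
  obtain z where sz: "supp_in z {..<5}" and uz: "gen_mult 5 sqK biquat_eps (Phi u) z = gen_one"
     and zu: "gen_mult 5 sqK biquat_eps z (Phi u) = gen_one"
    using two_sided_inv[OF ZD_kx supp_Phi[OF u] pn] by blast
  define v where "v = Psi z"
  have v: "v \<in> A_carrier" unfolding v_def by (rule Psi_carrier)
  have pv: "Phi v = z" unfolding v_def by (rule Phi_Psi[OF sz])
  have "A_mult u v = Psi (Phi (A_mult u v))" by (rule Psi_Phi[OF A_mult_carrier, symmetric])
  also have "\<dots> = A_one" by (simp add: Phi_mult[OF u v] pv uz Psi_one)
  finally have 1: "A_mult u v = A_one" .
  have "A_mult v u = Psi (Phi (A_mult v u))" by (rule Psi_Phi[OF A_mult_carrier, symmetric])
  also have "\<dots> = A_one" by (simp add: Phi_mult[OF v u] pv zu Psi_one)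
  finally have 2: "A_mult v u = A_one" .
  show "\<exists>v\<in>A_carrier. A_mult u v = A_one \<and> A_mult v u = A_one" using v 1 2 by blast
qed

end
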